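(* Let $p$ be a prime, $X$ a countable set, and let $K,L\subseteq\mathbb{Q}_p(X)$ be $\tau$-closed sub-$\mathbb{Z}_p$-modules. Then: (a) $K=K^{\perp\perp}$; (b) if $K\subseteq L$ then $L^\perp\subseteq K^\perp$; (c) $(K+L)^\perp=K^\perp\cap L^\perp$; (d) $(K\cap L)^\perp$ equals the $\tau$-closure of $K^\perp+L^\perp$.
   Context: $\mathbb{Q}_p(X)$ is the set of maps $\xi:X\to\mathbb{Q}_p$ with $|\xi(i)|_p\le1$ for all but finitely many $i$, a $\mathbb{Z}_p$-module under coordinatewise operations, with the topology $\tau$ in which $A\subseteq\mathbb{Q}_p(X)$ is open iff for every finite $P\subseteq X$ the set $A\cap\big(\prod_{i\in P}\mathbb{Q}_p\times\prod_{j\in X\setminus P}\mathbb{Z}_p\big)$ is open in the product topology. The pairing is $\langle\xi,\eta\rangle=\iota\big(\sum_{i\in X}(\xi(i)\eta(i)+\mathbb{Z}_p)\big)\in S^1$, where $\iota:\mathbb{Q}_p/\mathbb{Z}_p\cong\mathbb{Z}[1/p]/\mathbb{Z}\hookrightarrow\mathbb{R}/\mathbb{Z}\cong S^1$ is the canonical embedding. For $K\subseteq\mathbb{Q}_p(X)$, $K^\perp=\{\xi\in\mathbb{Q}_p(X):\langle\xi,\eta\rangle=1\ \forall\eta\in K\}$ (the neutral element of $S^1$; written $0$ when $S^1\cong\mathbb{R}/\mathbb{Z}$). *)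

theory Defs
  imports Complex_Main "HOL-Library.Countable_Set" "HOL-Computational_Algebra.Primes"
begin

text \<open>An element x of Q_p is represented by the sequence of its canonical
representatives x_n of x modulo p^n Z_p, where x_n is the unique element of
Z[1/p] with 0 <= x_n < p^n and x - x_n in p^n Z_p (i.e. the partial sums of
the p-adic digit expansion of x, digits of exponent below n).  So x_0 is the
class of x in Q_p/Z_p = Z[1/p]/Z, and x lies in Z_p iff x_0 = 0.\<close>

definition rmod :: "rat \<Rightarrow> rat \<Rightarrow> rat" where
  "rmod r m = r - m * of_int (floor (r / m))"

definition Qp :: "nat \<Rightarrow> (nat \<Rightarrow> rat) set" where
  "Qp p = {x. (\<exists>k. \<forall>n. of_nat p ^ k * x n \<in> \<int>)
              \<and> (\<forall>n. 0 \<le> x n \<and> x n < of_nat p ^ n)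
              \<and> (\<forall>n. rmod (x (Suc n)) (of_nat p ^ n) = x n)}"

definition Zp :: "nat \<Rightarrow> (nat \<Rightarrow> rat) set" where
  "Zp p = {x \<in> Qp p. x 0 = 0}"

definition qp_zero :: "nat \<Rightarrow> rat" where
  "qp_zero = (\<lambda>n. 0)"

definition qp_add :: "nat \<Rightarrow> (nat \<Rightarrow> rat) \<Rightarrow> (nat \<Rightarrow> rat) \<Rightarrow> (nat \<Rightarrow> rat)" where
  "qp_add p x y = (\<lambda>n. rmod (x n + y n) (of_nat p ^ n))"

definition qp_den :: "nat \<Rightarrow> (nat \<Rightarrow> rat) \<Rightarrow> nat" where
  "qp_den p x = (LEAST k. \<forall>n. of_nat p ^ k * x n \<in> \<int>)"

definition qp_smult :: "nat \<Rightarrow> (nat \<Rightarrow> rat) \<Rightarrow> (nat \<Rightarrow> rat) \<Rightarrow> (nat \<Rightarrow> rat)" where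
  "qp_smult p a x = (\<lambda>n. rmod (a (n + qp_den p x) * x n) (of_nat p ^ n))"

text \<open>the class of the product x*y in Q_p/Z_p = Z[1/p]/Z, as a rational in [0,1)\<close>
definition qp_prod_frac :: "nat \<Rightarrow> (nat \<Rightarrow> rat) \<Rightarrow> (nat \<Rightarrow> rat) \<Rightarrow> rat" where
  "qp_prod_frac p x y =
     (let m = max (qp_den p x) (qp_den p y) in frac (x m * y m))"

definition QpX :: "nat \<Rightarrow> 'a set \<Rightarrow> ('a \<Rightarrow> nat \<Rightarrow> rat) set" where
  "QpX p X = {\<xi>. (\<forall>i\<in>X. \<xi> i \<in> Qp p) \<and> (\<forall>i. i \<notin> X \<longrightarrow> \<xi> i = qp_zero)
                 \<and> finite {i \<in> X. \<xi> i \<notin> Zp p}}"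

definition QpX_zero :: "'a \<Rightarrow> nat \<Rightarrow> rat" where
  "QpX_zero = (\<lambda>i. qp_zero)"

definition QpX_add :: "nat \<Rightarrow> ('a \<Rightarrow> nat \<Rightarrow> rat) \<Rightarrow> ('a \<Rightarrow> nat \<Rightarrow> rat) \<Rightarrow> ('a \<Rightarrow> nat \<Rightarrow> rat)" where
  "QpX_add p \<xi> \<eta> = (\<lambda>i. qp_add p (\<xi> i) (\<eta> i))"

definition QpX_smult :: "nat \<Rightarrow> (nat \<Rightarrow> rat) \<Rightarrow> ('a \<Rightarrow> nat \<Rightarrow> rat) \<Rightarrow> ('a \<Rightarrow> nat \<Rightarrow> rat)" where
  "QpX_smult p a \<xi> = (\<lambda>i. qp_smult p a (\<xi> i))"

definition submodule :: "nat \<Rightarrow> 'a set \<Rightarrow> ('a \<Rightarrow> nat \<Rightarrow> rat) set \<Rightarrow> bool" where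
  "submodule p X K \<longleftrightarrow> K \<subseteq> QpX p X \<and> QpX_zero \<in> K
     \<and> (\<forall>\<xi>\<in>K. \<forall>\<eta>\<in>K. QpX_add p \<xi> \<eta> \<in> K)
     \<and> (\<forall>a\<in>Zp p. \<forall>\<xi>\<in>K. QpX_smult p a \<xi> \<in> K)"

definition setsum_QpX :: "nat \<Rightarrow> ('a \<Rightarrow> nat \<Rightarrow> rat) set \<Rightarrow> ('a \<Rightarrow> nat \<Rightarrow> rat) set \<Rightarrow> ('a \<Rightarrow> nat \<Rightarrow> rat) set" where
  "setsum_QpX p K L = {QpX_add p \<xi> \<eta> | \<xi> \<eta>. \<xi> \<in> K \<and> \<eta> \<in> L}"

definition box :: "nat \<Rightarrow> 'a set \<Rightarrow> 'a set \<Rightarrow> ('a \<Rightarrow> nat \<Rightarrow> rat) set" where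
  "box p X P = {\<xi> \<in> QpX p X. \<forall>j \<in> X - P. \<xi> j \<in> Zp p}"

text \<open>A is tau-open iff for every finite P <= X, A \<inter> Box_P is open in the
product topology of Box_P.  The sets {y. y_n = x_n} are exactly the p-adic
balls x + p^n Z_p, so basic product neighbourhoods of xi in Box_P are
{eta in Box_P. eta i n = xi i n for i in F} with F finite.\<close>
definition tau_open :: "nat \<Rightarrow> 'a set \<Rightarrow> ('a \<Rightarrow> nat \<Rightarrow> rat) set \<Rightarrow> bool" where
  "tau_open p X A \<longleftrightarrow> A \<subseteq> QpX p X \<and>
     (\<forall>P. finite P \<and> P \<subseteq> X \<longrightarrow>
        (\<forall>\<xi> \<in> A \<inter> box p X P. \<exists>F n. finite F \<and> F \<subseteq> X \<and>
            {\<eta> \<in> box p X P. \<forall>i\<in>F. \<eta> i n = \<xi> i n} \<subseteq> A))"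

definition tau_closed :: "nat \<Rightarrow> 'a set \<Rightarrow> ('a \<Rightarrow> nat \<Rightarrow> rat) set \<Rightarrow> bool" where
  "tau_closed p X C \<longleftrightarrow> C \<subseteq> QpX p X \<and> tau_open p X (QpX p X - C)"

definition tau_closure :: "nat \<Rightarrow> 'a set \<Rightarrow> ('a \<Rightarrow> nat \<Rightarrow> rat) set \<Rightarrow> ('a \<Rightarrow> nat \<Rightarrow> rat) set" where
  "tau_closure p X S = \<Inter>{C. tau_closed p X C \<and> S \<subseteq> C}"

text \<open>pairing into S^1 = unit circle in C, via iota: Z[1/p]/Z -> R/Z -> S^1,
t |-> exp(2 pi i t).  Only finitely many summands are nonzero.\<close>
definition pairing :: "nat \<Rightarrow> 'a set \<Rightarrow> ('a \<Rightarrow> nat \<Rightarrow> rat) \<Rightarrow> ('a \<Rightarrow> nat \<Rightarrow> rat) \<Rightarrow> complex" where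
  "pairing p X \<xi> \<eta> = cis (2 * pi * real_of_rat
      (\<Sum>i \<in> {i \<in> X. \<xi> i \<notin> Zp p \<or> \<eta> i \<notin> Zp p}. qp_prod_frac p (\<xi> i) (\<eta> i)))"

definition perp :: "nat \<Rightarrow> 'a set \<Rightarrow> ('a \<Rightarrow> nat \<Rightarrow> rat) set \<Rightarrow> ('a \<Rightarrow> nat \<Rightarrow> rat) set" where
  "perp p X K = {\<xi> \<in> QpX p X. \<forall>\<eta> \<in> K. pairing p X \<xi> \<eta> = 1}"

end

theory Submission
  imports Defs "HOL-Library.Function_Algebras"
begin


definition cg :: "('b \<Rightarrow> rat) set \<Rightarrow> bool" where
  "cg H \<longleftrightarrow> 0 \<in> H \<and> (\<forall>x\<in>H. \<forall>y\<in>H. x + y \<in> H) \<and> (\<forall>x\<in>H. - x \<in> H)"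

definition zm :: "int \<Rightarrow> ('b \<Rightarrow> rat) \<Rightarrow> ('b \<Rightarrow> rat)" where
  "zm a t = (\<lambda>i. of_int a * t i)"

definition addm :: "('b \<Rightarrow> rat) set \<Rightarrow> (('b \<Rightarrow> rat) \<Rightarrow> rat) \<Rightarrow> bool" where
  "addm H \<chi> \<longleftrightarrow> (\<forall>x\<in>H. \<forall>y\<in>H. \<chi> (x + y) - \<chi> x - \<chi> y \<in> \<int>)"

definition span1 :: "('b \<Rightarrow> rat) set \<Rightarrow> ('b \<Rightarrow> rat) \<Rightarrow> ('b \<Rightarrow> rat) set" where
  "span1 H g = {h + zm a g | h a. h \<in> H}"

lemma zm_add: "zm (a + b) t = zm a t + zm b t"
  by (auto simp: zm_def fun_eq_iff algebra_simps)
lemma zm_add2: "zm a (t + u) = zm a t + zm a u"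
  by (auto simp: zm_def fun_eq_iff algebra_simps)
lemma zm_mult: "zm a (zm b t) = zm (a * b) t"
  by (auto simp: zm_def fun_eq_iff algebra_simps)
lemma zm_0[simp]: "zm 0 t = (0::'b\<Rightarrow>rat)"
  by (auto simp: zm_def fun_eq_iff)
lemma zm_1[simp]: "zm 1 t = t"
  by (auto simp: zm_def fun_eq_iff)
lemma zm_neg: "zm (- a) t = - zm a t"
  by (auto simp: zm_def fun_eq_iff)
lemma zm_diff: "zm (a - b) t = zm a t - zm b t"
  by (auto simp: zm_def fun_eq_iff algebra_simps)

lemma cg_diff: "cg H \<Longrightarrow> x \<in> H \<Longrightarrow> y \<in> H \<Longrightarrow> x - y \<in> H"
  unfolding cg_def by (metis diff_conv_add_uminus)

lemma cg_zm_nat: "cg H \<Longrightarrow> x \<in> H \<Longrightarrow> zm (int k) x \<in> H"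
proof (induction k)
  case 0 then show ?case unfolding cg_def by (metis of_nat_0 zm_0)
next
  case (Suc k)
  have e: "zm (int (Suc k)) x = zm (int k) x + x" by (simp add: zm_def fun_eq_iff algebra_simps)
  show ?case unfolding e using Suc unfolding cg_def by blast
qed

lemma cg_zm: "cg H \<Longrightarrow> x \<in> H \<Longrightarrow> zm a x \<in> H"
proof (cases "a \<ge> 0")
  case True
  assume "cg H" "x \<in> H"
  then show ?thesis
    using cg_zm_nat[of H x "nat a"] True by simp
next
  case False
  assume "cg H" "x \<in> H"
  then have "zm (int (nat (- a))) x \<in> H" by (rule cg_zm_nat)
  then have "- zm (- a) x \<in> H" using False \<open>cg H\<close> by (simp add: cg_def)
  then show ?thesis by (simp add: zm_neg)
qed

lemma addm_0: "cg H \<Longrightarrow> addm H \<chi> \<Longrightarrow> \<chi> 0 \<in> \<int>"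
proof -
  assume a: "cg H" "addm H \<chi>"
  then have "\<chi> (0 + 0) - \<chi> 0 - \<chi> 0 \<in> \<int>" unfolding addm_def cg_def by blast
  then have "- \<chi> 0 \<in> \<int>" by simp
  then show ?thesis using Ints_minus by fastforce
qed

lemma Ints_diff3: "a - b \<in> \<int> \<Longrightarrow> b - c \<in> \<int> \<Longrightarrow> (a::rat) - c \<in> \<int>"
proof -
  assume "a - b \<in> \<int>" "b - c \<in> \<int>"
  then have "(a - b) + (b - c) \<in> \<int>" by (rule Ints_add)
  then show ?thesis by simp
qed

lemma addm_neg: "cg H \<Longrightarrow> addm H \<chi> \<Longrightarrow> x \<in> H \<Longrightarrow> \<chi> (- x) + \<chi> x \<in> \<int>"
proof -
  assume a: "cg H" "addm H \<chi>" "x \<in> H"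
  then have "- x \<in> H" by (simp add: cg_def)
  then have "\<chi> (- x + x) - \<chi> (- x) - \<chi> x \<in> \<int>" using a unfolding addm_def by blast
  then have "\<chi> 0 - \<chi> (- x) - \<chi> x \<in> \<int>" by simp
  moreover have "\<chi> 0 \<in> \<int>" using a addm_0 by blast
  ultimately have "\<chi> 0 - (\<chi> 0 - \<chi> (- x) - \<chi> x) \<in> \<int>" using Ints_diff by blast
  then show ?thesis by (simp add: algebra_simps)
qed

lemma addm_zm_nat: "cg H \<Longrightarrow> addm H \<chi> \<Longrightarrow> x \<in> H \<Longrightarrow> \<chi> (zm (int k) x) - of_nat k * \<chi> x \<in> \<int>"
proof (induction k)
  case 0 then show ?case using addm_0 by (metis diff_zero mult_zero_left of_nat_0 zm_0)
next
  case (Suc k)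
  have e: "zm (int (Suc k)) x = zm (int k) x + x" by (simp add: zm_def fun_eq_iff algebra_simps)
  have "zm (int k) x \<in> H" using Suc cg_zm by blast
  then have "\<chi> (zm (int k) x + x) - \<chi> (zm (int k) x) - \<chi> x \<in> \<int>" using Suc by (simp add: addm_def)
  then have "\<chi> (zm (int k) x + x) - \<chi> (zm (int k) x) - \<chi> x +
     (\<chi> (zm (int k) x) - of_nat k * \<chi> x) \<in> \<int>" using Suc by (intro Ints_add) auto
  moreover have "\<chi> (zm (int k) x + x) - \<chi> (zm (int k) x) - \<chi> x +
     (\<chi> (zm (int k) x) - of_nat k * \<chi> x) = \<chi> (zm (int (Suc k)) x) - of_nat (Suc k) * \<chi> x"
    unfolding e by (simp add: algebra_simps)
  ultimately show ?case by simp
qed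

lemma addm_zm: "cg H \<Longrightarrow> addm H \<chi> \<Longrightarrow> x \<in> H \<Longrightarrow> \<chi> (zm a x) - of_int a * \<chi> x \<in> \<int>"
proof (cases "a \<ge> 0")
  case True
  assume a: "cg H" "addm H \<chi>" "x \<in> H"
  show ?thesis using addm_zm_nat[OF a, of "nat a"] True by simp
next
  case False
  assume a: "cg H" "addm H \<chi>" "x \<in> H"
  have 1: "\<chi> (zm (int (nat (- a))) x) - of_nat (nat (-a)) * \<chi> x \<in> \<int>" using addm_zm_nat[OF a] by blast
  have "zm (int (nat (- a))) x \<in> H" using a cg_zm by blast
  then have 2: "\<chi> (- zm (int (nat (- a))) x) + \<chi> (zm (int (nat (- a))) x) \<in> \<int>"
    using addm_neg a by blast
  have "zm a x = - zm (int (nat (- a))) x" using False by (simp add: zm_neg[symmetric])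
  moreover have "of_nat (nat (-a)) = - (of_int a :: rat)" using False by simp
  ultimately show ?thesis using Ints_diff[OF 2 1] by (simp add: algebra_simps)
qed



definition c1 :: "rat \<Rightarrow> rat \<Rightarrow> bool" where
  "c1 a b \<longleftrightarrow> a - b \<in> \<int>"

lemma c1_refl[simp]: "c1 a a" by (simp add: c1_def)
lemma c1_sym: "c1 a b \<Longrightarrow> c1 b a"
  unfolding c1_def using Ints_minus[of "a - b"] by simp
lemma c1_trans: "c1 a b \<Longrightarrow> c1 b c \<Longrightarrow> c1 a c"
  unfolding c1_def using Ints_diff3 by blast
lemma c1_add: "c1 a b \<Longrightarrow> c1 c d \<Longrightarrow> c1 (a + c) (b + d)"
proof -
  assume "c1 a b" "c1 c d"
  then have "(a - b) + (c - d) \<in> \<int>" unfolding c1_def by (rule Ints_add)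
  then show ?thesis unfolding c1_def by (simp add: algebra_simps)
qed
lemma c1_diff: "c1 a b \<Longrightarrow> c1 c d \<Longrightarrow> c1 (a - c) (b - d)"
proof -
  assume "c1 a b" "c1 c d"
  then have "(a - b) - (c - d) \<in> \<int>" unfolding c1_def by (rule Ints_diff)
  then show ?thesis unfolding c1_def by (simp add: algebra_simps)
qed
lemma c1_minus: "c1 a b \<Longrightarrow> c1 (- a) (- b)"
  using c1_diff[of 0 0 a b] by simp
lemma c1_mult: "c1 a b \<Longrightarrow> k \<in> \<int> \<Longrightarrow> c1 (k * a) (k * b)"
proof -
  assume "c1 a b" "k \<in> \<int>"
  then have "k * (a - b) \<in> \<int>" unfolding c1_def by (rule Ints_mult[rotated])
  then show ?thesis unfolding c1_def by (simp add: algebra_simps)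
qed
lemma c1_Ints: "c1 a b \<Longrightarrow> a \<in> \<int> \<longleftrightarrow> b \<in> \<int>"
proof -
  assume "c1 a b"
  then have "a - b \<in> \<int>" unfolding c1_def .
  then show ?thesis using Ints_diff[of a "a - b"] Ints_add[of "a - b" b] by auto
qed
lemma c1_int_iff: "c1 a 0 \<longleftrightarrow> a \<in> \<int>"
  unfolding c1_def by simp
lemma c1_addI: "c \<in> \<int> \<Longrightarrow> c1 (a + c) a"
  unfolding c1_def by simp
lemma c1_sum: "finite J \<Longrightarrow> (\<And>i. i \<in> J \<Longrightarrow> c1 (f i) (g i)) \<Longrightarrow> c1 (sum f J) (sum g J)"
  by (induction J rule: finite_induct) (auto intro: c1_add)

lemma addm_c1: "addm H \<chi> \<Longrightarrow> x \<in> H \<Longrightarrow> y \<in> H \<Longrightarrow> c1 (\<chi> (x + y)) (\<chi> x + \<chi> y)"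
  unfolding addm_def c1_def by (simp add: diff_diff_eq)

lemma c1_addmI: "(\<And>x y. x \<in> H \<Longrightarrow> y \<in> H \<Longrightarrow> c1 (\<chi> (x + y)) (\<chi> x + \<chi> y)) \<Longrightarrow> addm H \<chi>"
  unfolding addm_def c1_def by (simp add: diff_diff_eq)

lemma addm_diff: "cg H \<Longrightarrow> addm H \<chi> \<Longrightarrow> x \<in> H \<Longrightarrow> y \<in> H \<Longrightarrow> c1 (\<chi> (x - y)) (\<chi> x - \<chi> y)"
proof -
  assume a: "cg H" "addm H \<chi>" "x \<in> H" "y \<in> H"
  then have "x - y \<in> H" using cg_diff by blast
  then have "c1 (\<chi> ((x - y) + y)) (\<chi> (x - y) + \<chi> y)" using a addm_c1 by blast
  then have "c1 (\<chi> x) (\<chi> (x - y) + \<chi> y)" by simp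
  then have "c1 (\<chi> x - \<chi> y) (\<chi> (x - y) + \<chi> y - \<chi> y)" by (rule c1_diff) simp
  then show ?thesis by (simp add: c1_sym)
qed

lemma addm_zm_c1: "cg H \<Longrightarrow> addm H \<chi> \<Longrightarrow> x \<in> H \<Longrightarrow> c1 (\<chi> (zm a x)) (of_int a * \<chi> x)"
  using addm_zm c1_def by blast

lemma addm_sum: assumes c: "cg H" and ad: "addm H \<chi>" and fin: "finite J" and f: "\<And>i. i \<in> J \<Longrightarrow> f i \<in> H"
  shows "sum f J \<in> H \<and> c1 (\<chi> (sum f J)) (\<Sum>i\<in>J. \<chi> (f i))"
  using fin f
proof (induction J rule: finite_induct)
  case empty
  have "c1 (\<chi> 0) (0::rat)" using addm_0[OF c ad] c1_int_iff by blast
  moreover have "(0::'a\<Rightarrow>rat) \<in> H" using c cg_def by blast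
  ultimately show ?case unfolding sum.empty by blast
next
  case (insert j J)
  then have h: "sum f J \<in> H" "c1 (\<chi> (sum f J)) (\<Sum>i\<in>J. \<chi> (f i))" "f j \<in> H" by auto
  have e: "sum f (insert j J) = f j + sum f J" using insert by simp
  have "c1 (\<chi> (f j + sum f J)) (\<chi> (f j) + \<chi> (sum f J))" using ad h addm_c1 by blast
  moreover have "c1 (\<chi> (f j) + \<chi> (sum f J)) (\<chi> (f j) + (\<Sum>i\<in>J. \<chi> (f i)))"
    using h by (intro c1_add) auto
  ultimately have "c1 (\<chi> (sum f (insert j J))) (\<Sum>i\<in>insert j J. \<chi> (f i))"
    unfolding e using insert by (simp add: c1_trans)
  moreover have "sum f (insert j J) \<in> H" unfolding e using h c unfolding cg_def by blast
  ultimately show ?case by blast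
qed

lemma cg_span1: "cg H \<Longrightarrow> cg (span1 H g) \<and> H \<subseteq> span1 H g \<and> g \<in> span1 H g"
proof -
  assume c: "cg H"
  have sub: "H \<subseteq> span1 H g"
  proof
    fix h assume "h \<in> H" then show "h \<in> span1 H g" unfolding span1_def
      by (intro CollectI exI[of _ h] exI[of _ 0]) simp
  qed
  have gi: "g \<in> span1 H g" unfolding span1_def using c
    by (intro CollectI exI[of _ 0] exI[of _ 1]) (simp add: cg_def)
  have "cg (span1 H g)" unfolding cg_def
  proof (intro conjI ballI)
    show "0 \<in> span1 H g" using sub c by (auto simp: cg_def)
  next
    fix x y assume "x \<in> span1 H g" "y \<in> span1 H g"
    then obtain h a h' b where x: "x = h + zm a g" "h \<in> H" and y: "y = h' + zm b g" "h' \<in> H"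
      unfolding span1_def by blast
    have "x + y = (h + h') + zm (a + b) g" unfolding x y zm_add by (simp add: algebra_simps)
    moreover have "h + h' \<in> H" using c x y by (simp add: cg_def)
    ultimately show "x + y \<in> span1 H g" unfolding span1_def by blast
  next
    fix x assume "x \<in> span1 H g"
    then obtain h a where x: "x = h + zm a g" "h \<in> H"
      unfolding span1_def by blast
    have "- x = (- h) + zm (- a) g" unfolding x zm_neg by (simp add: algebra_simps)
    moreover have "- h \<in> H" using c x by (simp add: cg_def)
    ultimately show "- x \<in> span1 H g" unfolding span1_def by blast
  qed
  then show ?thesis using sub gi by blast
qed

lemma step_ext:
  assumes c: "cg H" and ad: "addm H \<chi>"
    and v: "\<And>a. zm a g \<in> H \<Longrightarrow> c1 (of_int a * v) (\<chi> (zm a g))"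
  shows "\<exists>\<chi>'. addm (span1 H g) \<chi>' \<and> (\<forall>h\<in>H. c1 (\<chi>' h) (\<chi> h)) \<and> c1 (\<chi>' g) v"
proof -
  define R where "R x = (SOME r. fst r \<in> H \<and> x = fst r + zm (snd r) g)" for x
  define \<chi>' where "\<chi>' x = \<chi> (fst (R x)) + of_int (snd (R x)) * v" for x
  have wd: "c1 (\<chi>' x) (\<chi> h + of_int a * v)" if "h \<in> H" "x = h + zm a g" for x h a
  proof -
    have "\<exists>r. fst r \<in> H \<and> x = fst r + zm (snd r) g" using that by (intro exI[of _ "(h,a)"]) simp
    then have Rx: "fst (R x) \<in> H \<and> x = fst (R x) + zm (snd (R x)) g" unfolding R_def by (rule someI_ex)
    define h' where "h' = fst (R x)"
    define a' where "a' = snd (R x)"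
    have h': "h' \<in> H" "x = h' + zm a' g" using Rx unfolding h'_def a'_def by auto
    have \<chi>x: "\<chi>' x = \<chi> h' + of_int a' * v" unfolding \<chi>'_def h'_def a'_def by simp
    have "h - h' = zm (a' - a) g" using h' that by (simp add: zm_diff algebra_simps)
    then have "zm (a' - a) g \<in> H" using cg_diff[OF c that(1) h'(1)] by simp
    then have "c1 (of_int (a' - a) * v) (\<chi> (zm (a' - a) g))" by (rule v)
    then have 1: "c1 (of_int (a' - a) * v) (\<chi> (h - h'))" using \<open>h - h' = _\<close> by simp
    have 2: "c1 (\<chi> (h - h')) (\<chi> h - \<chi> h')" using addm_diff c ad that(1) h'(1) by blast
    have "c1 (of_int (a' - a) * v) (\<chi> h - \<chi> h')" using c1_trans[OF 1 2] .
    then have "c1 (of_int (a' - a) * v + (\<chi> h' + of_int a * v)) (\<chi> h - \<chi> h' + (\<chi> h' + of_int a * v))"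
      by (rule c1_add) simp
    then show ?thesis unfolding \<chi>x by (simp add: algebra_simps)
  qed
  have "addm (span1 H g) \<chi>'"
  proof (rule c1_addmI)
    fix x y assume "x \<in> span1 H g" "y \<in> span1 H g"
    then obtain h a h' b where x: "x = h + zm a g" "h \<in> H" and y: "y = h' + zm b g" "h' \<in> H"
      unfolding span1_def by blast
    have xy: "x + y = (h + h') + zm (a + b) g" unfolding x y zm_add by (simp add: algebra_simps)
    have hh: "h + h' \<in> H" using c x y by (simp add: cg_def)
    have 1: "c1 (\<chi>' (x + y)) (\<chi> (h + h') + of_int (a + b) * v)" using wd[OF hh xy] .
    have 2: "c1 (\<chi> (h + h')) (\<chi> h + \<chi> h')" using addm_c1[OF ad x(2) y(2)] .
    have 3: "c1 (\<chi>' x + \<chi>' y) ((\<chi> h + of_int a * v) + (\<chi> h' + of_int b * v))"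
      using wd x y by (intro c1_add) auto
    have "c1 (\<chi> (h + h') + of_int (a + b) * v) (\<chi> h + \<chi> h' + of_int (a + b) * v)"
      using 2 by (rule c1_add) simp
    then have "c1 (\<chi>' (x + y)) ((\<chi> h + of_int a * v) + (\<chi> h' + of_int b * v))"
      using c1_trans[OF 1] by (simp add: algebra_simps)
    then show "c1 (\<chi>' (x + y)) (\<chi>' x + \<chi>' y)" using c1_trans c1_sym[OF 3] by blast
  qed
  moreover have "\<forall>h\<in>H. c1 (\<chi>' h) (\<chi> h)"
    using wd[of _ _ 0] by simp
  moreover have "c1 (\<chi>' g) v"
  proof -
    have "0 \<in> H" using c by (simp add: cg_def)
    then have "c1 (\<chi>' g) (\<chi> 0 + of_int 1 * v)" using wd[of 0 g 1] by simp
    moreover have "c1 (v + \<chi> 0) v" using addm_0[OF c ad] by (rule c1_addI)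
    then have "c1 (\<chi> 0 + of_int 1 * v) v" by (simp add: add.commute)
    ultimately show ?thesis by (rule c1_trans)
  qed
  ultimately show ?thesis by blast
qed



lemma good_v:
  assumes c: "cg H" and ad: "addm H \<chi>"
  shows "\<exists>v. \<forall>a. zm a g \<in> H \<longrightarrow> c1 (of_int a * v) (\<chi> (zm a g))"
proof (cases "\<exists>n::nat. n > 0 \<and> zm (int n) g \<in> H")
  case True
  define e where "e = (LEAST n::nat. n > 0 \<and> zm (int n) g \<in> H)"
  have e: "e > 0" "zm (int e) g \<in> H" using LeastI_ex[OF True] unfolding e_def by auto
  have emin: "\<not> (n > 0 \<and> zm (int n) g \<in> H)" if "n < e" for n
    using not_less_Least[of n "\<lambda>n. n > 0 \<and> zm (int n) g \<in> H"] that unfolding e_def by blast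
  define v where "v = \<chi> (zm (int e) g) / of_nat e"
  show ?thesis
  proof (intro exI allI impI)
    fix a assume a: "zm a g \<in> H"
    define q where "q = a div int e"
    define r where "r = a mod int e"
    have ar: "a = q * int e + r" unfolding q_def r_def by simp
    have r0: "0 \<le> r" "r < int e" unfolding r_def using e by auto
    have "zm r g = zm a g - zm q (zm (int e) g)" unfolding zm_mult using ar by (simp add: zm_def fun_eq_iff algebra_simps)
    then have "zm r g \<in> H" using cg_diff[OF c a cg_zm[OF c e(2)]] by metis
    then have "r = 0"
    proof (rule contrapos_pp)
      assume "r \<noteq> 0"
      then have "nat r > 0" "nat r < e" "int (nat r) = r" using r0 by auto
      then show "zm r g \<notin> H" using emin[of "nat r"] by auto
    qed
    then have aq: "a = q * int e" using ar by simp
    have "of_int a * v = of_int q * \<chi> (zm (int e) g)" unfolding v_def aq using e(1) by (simp add: field_simps)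
    moreover have "zm a g = zm q (zm (int e) g)" unfolding aq zm_mult ..
    moreover have "c1 (\<chi> (zm q (zm (int e) g))) (of_int q * \<chi> (zm (int e) g))"
      by (rule addm_zm_c1[OF c ad e(2)])
    ultimately show "c1 (of_int a * v) (\<chi> (zm a g))" by (simp add: c1_sym)
  qed
next
  case False
  show ?thesis
  proof (intro exI allI impI)
    fix a assume a: "zm a g \<in> H"
    have "a = 0"
    proof (rule ccontr)
      assume "a \<noteq> 0"
      then consider "a > 0" | "a < 0" by linarith
      then show False
      proof cases
        case 1
        then have "nat a > 0 \<and> zm (int (nat a)) g \<in> H" using a by simp
        then show False using False by blast
      next
        case 2
        have "zm (- a) g \<in> H" unfolding zm_neg using a c by (simp add: cg_def)
        then have "nat (- a) > 0 \<and> zm (int (nat (- a))) g \<in> H" using 2 by simp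
        then show False using False by blast
      qed
    qed
    then show "c1 (of_int a * 0) (\<chi> (zm a g))"
      using addm_0[OF c ad] c1_int_iff c1_sym by auto
  qed
qed

primrec chain :: "('b \<Rightarrow> rat) set \<Rightarrow> (('b \<Rightarrow> rat) \<Rightarrow> rat) \<Rightarrow> (nat \<Rightarrow> 'b \<Rightarrow> rat) \<Rightarrow> nat
   \<Rightarrow> ('b \<Rightarrow> rat) set \<times> (('b \<Rightarrow> rat) \<Rightarrow> rat)" where
  "chain H0 \<chi>0 g 0 = (H0, \<chi>0)"
| "chain H0 \<chi>0 g (Suc k) = (span1 (fst (chain H0 \<chi>0 g k)) (g k),
     SOME \<chi>'. addm (span1 (fst (chain H0 \<chi>0 g k)) (g k)) \<chi>' \<and>
        (\<forall>h\<in>fst (chain H0 \<chi>0 g k). c1 (\<chi>' h) (snd (chain H0 \<chi>0 g k) h)))"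

lemma chain_step:
  assumes c: "cg H" and ad: "addm H \<chi>"
  shows "\<exists>\<chi>'. addm (span1 H g) \<chi>' \<and> (\<forall>h\<in>H. c1 (\<chi>' h) (\<chi> h))"
proof -
  obtain v where "\<forall>a. zm a g \<in> H \<longrightarrow> c1 (of_int a * v) (\<chi> (zm a g))" using good_v[OF c ad] by blast
  then show ?thesis using step_ext[OF c ad, of g v] by blast
qed

lemma chain_inv:
  assumes c: "cg H0" and ad: "addm H0 \<chi>0"
  shows "cg (fst (chain H0 \<chi>0 g k)) \<and> addm (fst (chain H0 \<chi>0 g k)) (snd (chain H0 \<chi>0 g k))"
proof (induction k)
  case 0 then show ?case using c ad by simp
next
  case (Suc k)
  let ?H = "fst (chain H0 \<chi>0 g k)" and ?c = "snd (chain H0 \<chi>0 g k)"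
  have ex: "\<exists>\<chi>'. addm (span1 ?H (g k)) \<chi>' \<and> (\<forall>h\<in>?H. c1 (\<chi>' h) (?c h))"
    using chain_step Suc by blast
  have "addm (span1 ?H (g k)) (snd (chain H0 \<chi>0 g (Suc k)))"
    using someI_ex[OF ex] by simp
  moreover have "cg (span1 ?H (g k))" using cg_span1 Suc by blast
  ultimately show ?case by simp
qed

lemma chain_Suc:
  assumes c: "cg H0" and ad: "addm H0 \<chi>0"
  shows "fst (chain H0 \<chi>0 g k) \<subseteq> fst (chain H0 \<chi>0 g (Suc k)) \<and> g k \<in> fst (chain H0 \<chi>0 g (Suc k))
    \<and> (\<forall>h\<in>fst (chain H0 \<chi>0 g k). c1 (snd (chain H0 \<chi>0 g (Suc k)) h) (snd (chain H0 \<chi>0 g k) h))"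
proof -
  let ?H = "fst (chain H0 \<chi>0 g k)" and ?c = "snd (chain H0 \<chi>0 g k)"
  have i: "cg ?H" "addm ?H ?c" using chain_inv[OF c ad] by auto
  have ex: "\<exists>\<chi>'. addm (span1 ?H (g k)) \<chi>' \<and> (\<forall>h\<in>?H. c1 (\<chi>' h) (?c h))"
    using chain_step i by blast
  have "\<forall>h\<in>?H. c1 (snd (chain H0 \<chi>0 g (Suc k)) h) (?c h)"
    using someI_ex[OF ex] by simp
  moreover have "?H \<subseteq> span1 ?H (g k) \<and> g k \<in> span1 ?H (g k)" using cg_span1 i by blast
  ultimately show ?thesis by simp
qed

lemma chain_mono:
  assumes c: "cg H0" and ad: "addm H0 \<chi>0" and jk: "j \<le> k"
  shows "fst (chain H0 \<chi>0 g j) \<subseteq> fst (chain H0 \<chi>0 g k)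
    \<and> (\<forall>h\<in>fst (chain H0 \<chi>0 g j). c1 (snd (chain H0 \<chi>0 g k) h) (snd (chain H0 \<chi>0 g j) h))"
  using jk
proof (induction k rule: dec_induct)
  case base then show ?case by simp
next
  case (step k)
  have s: "fst (chain H0 \<chi>0 g k) \<subseteq> fst (chain H0 \<chi>0 g (Suc k))"
     "\<forall>h\<in>fst (chain H0 \<chi>0 g k). c1 (snd (chain H0 \<chi>0 g (Suc k)) h) (snd (chain H0 \<chi>0 g k) h)"
    using chain_Suc[OF c ad] by auto
  show ?case
  proof (intro conjI ballI)
    show "fst (chain H0 \<chi>0 g j) \<subseteq> fst (chain H0 \<chi>0 g (Suc k))" using step s by blast
  next
    fix h assume h: "h \<in> fst (chain H0 \<chi>0 g j)"
    then have "h \<in> fst (chain H0 \<chi>0 g k)" using step by blast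
    then have "c1 (snd (chain H0 \<chi>0 g (Suc k)) h) (snd (chain H0 \<chi>0 g k) h)" using s by blast
    moreover have "c1 (snd (chain H0 \<chi>0 g k) h) (snd (chain H0 \<chi>0 g j) h)" using step h by blast
    ultimately show "c1 (snd (chain H0 \<chi>0 g (Suc k)) h) (snd (chain H0 \<chi>0 g j) h)" by (rule c1_trans)
  qed
qed

lemma extend:
  fixes g :: "nat \<Rightarrow> 'b \<Rightarrow> rat"
  assumes c: "cg H0" and ad: "addm H0 \<chi>0"
  shows "\<exists>H \<chi>. cg H \<and> H0 \<subseteq> H \<and> (\<forall>k. g k \<in> H) \<and> addm H \<chi> \<and> (\<forall>h\<in>H0. c1 (\<chi> h) (\<chi>0 h))"
proof -
  define Hk where "Hk k = fst (chain H0 \<chi>0 g k)" for k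
  define ck where "ck k = snd (chain H0 \<chi>0 g k)" for k
  define H where "H = (\<Union>k. Hk k)"
  define \<chi> where "\<chi> x = ck (LEAST k. x \<in> Hk k) x" for x
  have mono: "Hk j \<subseteq> Hk k" "\<forall>h\<in>Hk j. c1 (ck k h) (ck j h)" if "j \<le> k" for j k
    using chain_mono[OF c ad that] unfolding Hk_def ck_def by auto
  have inv: "cg (Hk k)" "addm (Hk k) (ck k)" for k
    using chain_inv[OF c ad] unfolding Hk_def ck_def by auto
  have chi: "c1 (\<chi> x) (ck k x)" if "x \<in> Hk k" for x k
  proof -
    let ?k0 = "LEAST k. x \<in> Hk k"
    have "x \<in> Hk ?k0" using LeastI[of "\<lambda>k. x \<in> Hk k", OF that] .
    moreover have "?k0 \<le> k" using Least_le[of "\<lambda>k. x \<in> Hk k", OF that] .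
    ultimately have "c1 (ck k x) (ck ?k0 x)" using mono by blast
    then show ?thesis unfolding \<chi>_def by (rule c1_sym)
  qed
  have two: "\<exists>k. x \<in> Hk k \<and> y \<in> Hk k" if xy: "x \<in> H" "y \<in> H" for x y
  proof -
    obtain i j where "x \<in> Hk i" "y \<in> Hk j" using xy unfolding H_def by blast
    then show ?thesis using mono[of i "max i j"] mono[of j "max i j"] by (intro exI[of _ "max i j"]) auto
  qed
  have "cg H" unfolding cg_def
  proof (intro conjI ballI)
    show "0 \<in> H" using inv[of 0] unfolding H_def cg_def by blast
  next
    fix x y assume "x \<in> H" "y \<in> H"
    then obtain k where "x \<in> Hk k" "y \<in> Hk k" using two by blast
    then show "x + y \<in> H" using inv[of k] unfolding H_def cg_def by blast
  next
    fix x assume "x \<in> H"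
    then obtain k where "x \<in> Hk k" unfolding H_def by blast
    then show "- x \<in> H" using inv[of k] unfolding H_def cg_def by blast
  qed
  moreover have "Hk 0 = H0" unfolding Hk_def by simp
  then have "H0 \<subseteq> H" unfolding H_def by blast
  moreover have gk: "\<forall>k. g k \<in> H"
    using chain_Suc[OF c ad, of g] unfolding H_def Hk_def by blast
  moreover have "addm H \<chi>"
  proof (rule c1_addmI)
    fix x y assume "x \<in> H" "y \<in> H"
    then obtain k where k: "x \<in> Hk k" "y \<in> Hk k" using two by blast
    then have xy: "x + y \<in> Hk k" using inv[of k] unfolding cg_def by blast
    have "c1 (\<chi> (x + y)) (ck k (x + y))" using chi[OF xy] .
    moreover have "c1 (ck k (x + y)) (ck k x + ck k y)" using addm_c1[OF inv(2) k] .
    moreover have "c1 (ck k x + ck k y) (\<chi> x + \<chi> y)" using chi k by (intro c1_add) (auto intro: c1_sym)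
    ultimately show "c1 (\<chi> (x + y)) (\<chi> x + \<chi> y)" using c1_trans by blast
  qed
  moreover have "\<forall>h\<in>H0. c1 (\<chi> h) (\<chi>0 h)"
  proof
    fix h assume "h \<in> H0"
    then have "h \<in> Hk 0" unfolding Hk_def by simp
    then have "c1 (\<chi> h) (ck 0 h)" by (rule chi)
    then show "c1 (\<chi> h) (\<chi>0 h)" unfolding ck_def by simp
  qed
  ultimately show ?thesis by (intro exI[of _ H] exI[of _ \<chi>]) simp
qed



lemma cis_rat: "cis (2 * pi * real_of_rat r) = 1 \<longleftrightarrow> r \<in> \<int>"
proof
  assume "cis (2 * pi * real_of_rat r) = 1"
  then have "cos (2 * pi * real_of_rat r) = 1" by (metis cis.sel(1) one_complex.sel(1))
  then obtain n :: int where "2 * pi * real_of_rat r = real_of_int n * 2 * pi"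
    using cos_one_2pi_int by blast
  then have "real_of_rat r = real_of_int n" by simp
  then have "r = of_int n" by (metis of_rat_of_int_eq of_rat_eq_iff)
  then show "r \<in> \<int>" by simp
next
  assume "r \<in> \<int>"
  then obtain n where "r = of_int n" by (auto elim: Ints_cases)
  then have "real_of_rat r = real_of_int n" by (simp add: of_rat_of_int_eq)
  then show "cis (2 * pi * real_of_rat r) = 1" using cis_multiple_2pi[of "real_of_int n"] by simp
qed

lemma rmod_bounds: "m > 0 \<Longrightarrow> 0 \<le> rmod r m \<and> rmod r m < m"
proof -
  assume m: "m > 0"
  have e: "r / m * m = r" using m by simp
  have "of_int \<lfloor>r / m\<rfloor> * m \<le> r / m * m" using m by (intro mult_right_mono) (linarith, simp)
  moreover have "r / m * m < (of_int \<lfloor>r / m\<rfloor> + 1) * m" using m by (intro mult_strict_right_mono) (linarith, simp)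
  ultimately have "m * of_int \<lfloor>r / m\<rfloor> \<le> r" "r < m * of_int \<lfloor>r / m\<rfloor> + m"
    using m by (simp_all add: algebra_simps)
  then show ?thesis unfolding rmod_def by simp
qed

lemma rmod_int: "m \<noteq> 0 \<Longrightarrow> (r - rmod r m) / m \<in> \<int>"
  unfolding rmod_def by simp

lemma rmod_unique:
  assumes m: "m > 0" and y: "0 \<le> y" "y < m" and d: "(r - y) / m \<in> \<int>"
  shows "rmod r m = y"
proof -
  obtain k where k: "(r - y) / m = of_int k" using d by (auto elim: Ints_cases)
  then have r: "r = y + m * of_int k" using m by (simp add: field_simps)
  have "r / m = y / m + of_int k" using m unfolding r by (simp add: field_simps)
  moreover have "0 \<le> y / m" "y / m < 1" using m y by auto
  ultimately have "\<lfloor>r / m\<rfloor> = k" by (simp add: floor_unique)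
  then show ?thesis unfolding rmod_def r by simp
qed

lemma rmod_id: "m > 0 \<Longrightarrow> 0 \<le> r \<Longrightarrow> r < m \<Longrightarrow> rmod r m = r"
  by (rule rmod_unique) auto

abbreviation Pw :: "nat \<Rightarrow> nat \<Rightarrow> rat" where "Pw p n \<equiv> of_nat p ^ n"

lemma Pw_pos: "p > 0 \<Longrightarrow> Pw p n > 0" by simp
lemma Pw_Ints: "Pw p n \<in> \<int>" by simp

lemma div_Ints_mono:
  assumes "p > 0" "a / Pw p m \<in> \<int>" "k \<le> m"
  shows "a / Pw p k \<in> \<int>"
proof -
  have "a / Pw p k = (a / Pw p m) * Pw p (m - k)"
    using assms by (simp add: power_diff field_simps)
  then show ?thesis using Ints_mult[OF assms(2) Pw_Ints[of p "m - k"]] by simp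
qed

lemma mult_Ints_mono:
  assumes "Pw p k * a \<in> \<int>" "k \<le> m"
  shows "Pw p m * a \<in> \<int>"
proof -
  have "Pw p m = Pw p (m - k) * Pw p k" using assms(2) by (simp add: power_add[symmetric])
  then have "Pw p m * a = Pw p (m - k) * (Pw p k * a)" by (metis mult.assoc)
  then show ?thesis using Ints_mult[OF Pw_Ints[of p "m - k"] assms(1)] by metis
qed

lemma QpD:
  assumes "x \<in> Qp p"
  shows "\<exists>k. \<forall>n. Pw p k * x n \<in> \<int>" "0 \<le> x n" "x n < Pw p n" "rmod (x (Suc n)) (Pw p n) = x n"
  using assms unfolding Qp_def by auto

lemma Qp_cong:
  assumes x: "x \<in> Qp p" and p: "p > 0" and km: "k \<le> m"
  shows "(x m - x k) / Pw p k \<in> \<int>"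
  using km
proof (induction m rule: dec_induct)
  case base then show ?case by simp
next
  case (step m)
  have "(x (Suc m) - rmod (x (Suc m)) (Pw p m)) / Pw p m \<in> \<int>"
    using p by (intro rmod_int) simp
  then have "(x (Suc m) - x m) / Pw p m \<in> \<int>" using QpD(4)[OF x] by simp
  then have "(x (Suc m) - x m) / Pw p k \<in> \<int>" using div_Ints_mono[OF p _ step(1)] by blast
  then have "(x (Suc m) - x m) / Pw p k + (x m - x k) / Pw p k \<in> \<int>" using step(3) by (rule Ints_add)
  then show ?case by (simp add: diff_divide_distrib)
qed

lemma Qp_cong_int:
  assumes x: "x \<in> Qp p" and p: "p > 0" and km: "k \<le> m"
  obtains j :: int where "x m = x k + Pw p k * of_int j"
proof -
  obtain j where "(x m - x k) / Pw p k = of_int j" using Qp_cong[OF assms] by (auto elim: Ints_cases)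
  then have "x m = x k + Pw p k * of_int j" using p by (simp add: field_simps)
  then show ?thesis using that by blast
qed

lemma bound_one:
  assumes x: "x \<in> Qp p" and p: "p > 0" and N: "Pw p d * x N \<in> \<int>"
  shows "Pw p d * x k \<in> \<int>"
proof (cases "k \<le> N")
  case True
  obtain j where "x N = x k + Pw p k * of_int j" using Qp_cong_int[OF x p True] .
  then have "Pw p d * x k = Pw p d * x N - Pw p d * Pw p k * of_int j" by (simp add: algebra_simps)
  then show ?thesis using N by simp
next
  case False
  then have "N \<le> k" by simp
  obtain j where "x k = x N + Pw p N * of_int j" using Qp_cong_int[OF x p \<open>N \<le> k\<close>] .
  then have "Pw p d * x k = Pw p d * x N + Pw p d * Pw p N * of_int j" by (simp add: algebra_simps)
  then show ?thesis using N by simp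
qed

lemma den_prop:
  assumes x: "x \<in> Qp p"
  shows "Pw p (qp_den p x) * x n \<in> \<int>"
proof -
  have "\<exists>k. \<forall>n. Pw p k * x n \<in> \<int>" using QpD(1)[OF x] .
  then have "\<forall>n. Pw p (qp_den p x) * x n \<in> \<int>" unfolding qp_den_def by (rule LeastI_ex)
  then show ?thesis by blast
qed

lemma den_le: "(\<And>n. Pw p d * x n \<in> \<int>) \<Longrightarrow> qp_den p x \<le> d"
  unfolding qp_den_def by (rule Least_le) blast

lemma den_mono: "x \<in> Qp p \<Longrightarrow> qp_den p x \<le> m \<Longrightarrow> Pw p m * x n \<in> \<int>"
  using den_prop mult_Ints_mono by blast

lemma Qp_0_int: "x \<in> Qp p \<Longrightarrow> x 0 \<in> \<int> \<Longrightarrow> x 0 = 0"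
proof -
  assume x: "x \<in> Qp p" "x 0 \<in> \<int>"
  then have "0 \<le> x 0" "x 0 < 1" using QpD(2,3)[OF x(1), of 0] by auto
  moreover obtain j where "x 0 = of_int j" using x(2) by (auto elim: Ints_cases)
  ultimately show ?thesis by simp
qed

lemma Zp_iff:
  assumes x: "x \<in> Qp p" and p: "p > 0"
  shows "x \<in> Zp p \<longleftrightarrow> (\<forall>n. x n \<in> \<int>)"
proof
  assume "x \<in> Zp p"
  then have "Pw p 0 * x 0 \<in> \<int>" unfolding Zp_def by simp
  then show "\<forall>n. x n \<in> \<int>" using bound_one[OF x p, of 0 0] by simp
next
  assume "\<forall>n. x n \<in> \<int>"
  then show "x \<in> Zp p" using Qp_0_int[OF x] x unfolding Zp_def by simp
qed

lemma Zp_den: "x \<in> Zp p \<Longrightarrow> p > 0 \<Longrightarrow> qp_den p x = 0"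
proof -
  assume a: "x \<in> Zp p" "p > 0"
  then have "x \<in> Qp p" unfolding Zp_def by simp
  then have "\<forall>n. x n \<in> \<int>" using Zp_iff a by blast
  then have "qp_den p x \<le> 0" by (intro den_le) simp
  then show ?thesis by simp
qed

lemma Zp_den_iff: "x \<in> Qp p \<Longrightarrow> p > 0 \<Longrightarrow> x \<in> Zp p \<longleftrightarrow> qp_den p x = 0"
  using Zp_den den_prop[of x p 0] Qp_0_int unfolding Zp_def by fastforce

lemma qp_zero_Zp: "p > 0 \<Longrightarrow> qp_zero \<in> Zp p"
  unfolding Zp_def Qp_def qp_zero_def rmod_def by simp

lemma frac_c1: "c1 (frac z) z"
  unfolding c1_def frac_def by simp

lemma pf_congr:
  assumes x: "x \<in> Qp p" and y: "y \<in> Qp p" and p: "p > 0" and mm: "m \<le> m'"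
    and bx: "Pw p m * x m \<in> \<int>" and "Pw p m * y m \<in> \<int>"
  shows "c1 (x m' * y m') (x m * y m)"
proof -
  obtain a where a: "x m' = x m + Pw p m * of_int a" using Qp_cong_int[OF x p mm] .
  obtain b where b: "y m' = y m + Pw p m * of_int b" using Qp_cong_int[OF y p mm] .
  have "x m' * y m' - x m * y m = of_int a * (Pw p m * y m) + of_int b * (Pw p m * x m) + Pw p m * Pw p m * of_int a * of_int b"
    unfolding a b by (simp add: algebra_simps)
  also have "\<dots> \<in> \<int>" using assms by simp
  finally show ?thesis unfolding c1_def .
qed

lemma pf_c1:
  assumes x: "x \<in> Qp p" and y: "y \<in> Qp p" and p: "p > 0"
    and bx: "\<And>n. Pw p m * x n \<in> \<int>" and hy: "\<And>n. Pw p m * y n \<in> \<int>"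
  shows "c1 (qp_prod_frac p x y) (x m * y m)"
proof -
  define M where "M = max (qp_den p x) (qp_den p y)"
  define K where "K = max m M"
  have bM: "Pw p M * x M \<in> \<int>" "Pw p M * y M \<in> \<int>"
    unfolding M_def using den_mono[OF x] den_mono[OF y] by auto
  have 1: "c1 (x K * y K) (x M * y M)" using pf_congr[OF x y p _ bM] unfolding K_def by simp
  have 2: "c1 (x K * y K) (x m * y m)" using pf_congr[OF x y p _ bx hy] unfolding K_def by simp
  have "qp_prod_frac p x y = frac (x M * y M)" unfolding qp_prod_frac_def M_def Let_def by simp
  then have "c1 (qp_prod_frac p x y) (x M * y M)" using frac_c1 by simp
  then show ?thesis using 1 2 by (meson c1_sym c1_trans)
qed

lemma pf_Zp: "x \<in> Zp p \<Longrightarrow> y \<in> Zp p \<Longrightarrow> p > 0 \<Longrightarrow> qp_prod_frac p x y = 0"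
  unfolding qp_prod_frac_def using Zp_den[of x p] Zp_den[of y p] by (simp add: Zp_def)

lemma pf_sym: "qp_prod_frac p x y = qp_prod_frac p y x"
  unfolding qp_prod_frac_def by (simp add: max.commute mult.commute)



definition Idx :: "nat \<Rightarrow> ('a \<Rightarrow> nat \<Rightarrow> rat) \<Rightarrow> ('a \<Rightarrow> nat \<Rightarrow> rat) \<Rightarrow> 'a set" where
  "Idx p \<xi> \<eta> = {i. \<xi> i \<notin> Zp p \<or> \<eta> i \<notin> Zp p}"

definition psum :: "nat \<Rightarrow> ('a \<Rightarrow> nat \<Rightarrow> rat) \<Rightarrow> ('a \<Rightarrow> nat \<Rightarrow> rat) \<Rightarrow> rat" where
  "psum p \<xi> \<eta> = (\<Sum>i\<in>Idx p \<xi> \<eta>. qp_prod_frac p (\<xi> i) (\<eta> i))"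

lemma Zp_Qp: "x \<in> Zp p \<Longrightarrow> x \<in> Qp p" unfolding Zp_def by simp

lemma QpX_Qp: "\<xi> \<in> QpX p X \<Longrightarrow> p > 0 \<Longrightarrow> \<xi> i \<in> Qp p"
  unfolding QpX_def using qp_zero_Zp[of p] Zp_Qp by (cases "i \<in> X") auto

lemma QpX_nonZp: "\<xi> \<in> QpX p X \<Longrightarrow> p > 0 \<Longrightarrow> \<xi> i \<notin> Zp p \<Longrightarrow> i \<in> X"
  unfolding QpX_def using qp_zero_Zp[of p] by auto

lemma QpX_fin: "\<xi> \<in> QpX p X \<Longrightarrow> p > 0 \<Longrightarrow> finite {i. \<xi> i \<notin> Zp p}"
proof -
  assume a: "\<xi> \<in> QpX p X" "p > 0"
  have "{i. \<xi> i \<notin> Zp p} = {i \<in> X. \<xi> i \<notin> Zp p}" using QpX_nonZp[OF a] by blast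
  then show ?thesis using a(1) unfolding QpX_def by simp
qed

lemma Idx_fin: "\<xi> \<in> QpX p X \<Longrightarrow> \<eta> \<in> QpX p X \<Longrightarrow> p > 0 \<Longrightarrow> finite (Idx p \<xi> \<eta>)"
proof -
  assume a: "\<xi> \<in> QpX p X" "\<eta> \<in> QpX p X" "p > 0"
  have "Idx p \<xi> \<eta> = {i. \<xi> i \<notin> Zp p} \<union> {i. \<eta> i \<notin> Zp p}" unfolding Idx_def by blast
  then show ?thesis using QpX_fin[OF a(1,3)] QpX_fin[OF a(2,3)] by simp
qed

lemma pairing_eq:
  assumes "\<xi> \<in> QpX p X" "\<eta> \<in> QpX p X" "p > 0"
  shows "pairing p X \<xi> \<eta> = 1 \<longleftrightarrow> psum p \<xi> \<eta> \<in> \<int>"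
proof -
  have "{i \<in> X. \<xi> i \<notin> Zp p \<or> \<eta> i \<notin> Zp p} = Idx p \<xi> \<eta>"
    unfolding Idx_def using QpX_nonZp[OF assms(1,3)] QpX_nonZp[OF assms(2,3)] by blast
  then have "pairing p X \<xi> \<eta> = cis (2 * pi * real_of_rat (psum p \<xi> \<eta>))"
    unfolding pairing_def psum_def by simp
  then show ?thesis using cis_rat by simp
qed

lemma psum_J:
  assumes x: "\<xi> \<in> QpX p X" and y: "\<eta> \<in> QpX p X" and p: "p > 0" and J: "finite J" "Idx p \<xi> \<eta> \<subseteq> J"
  shows "psum p \<xi> \<eta> = (\<Sum>i\<in>J. qp_prod_frac p (\<xi> i) (\<eta> i))"
  unfolding psum_def
proof (rule sum.mono_neutral_left[OF J(1) J(2)])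
  show "\<forall>i\<in>J - Idx p \<xi> \<eta>. qp_prod_frac p (\<xi> i) (\<eta> i) = 0"
    unfolding Idx_def using pf_Zp p by blast
qed

lemma psum_c1:
  assumes x: "\<xi> \<in> QpX p X" and y: "\<eta> \<in> QpX p X" and p: "p > 0" and J: "finite J" "Idx p \<xi> \<eta> \<subseteq> J"
    and b: "\<And>i n. i \<in> J \<Longrightarrow> Pw p m * \<xi> i n \<in> \<int> \<and> Pw p m * \<eta> i n \<in> \<int>"
  shows "c1 (psum p \<xi> \<eta>) (\<Sum>i\<in>J. \<xi> i m * \<eta> i m)"
  unfolding psum_J[OF assms(1-5)]
  using J(1)
proof (rule c1_sum)
  fix i assume "i \<in> J"
  then show "c1 (qp_prod_frac p (\<xi> i) (\<eta> i)) (\<xi> i m * \<eta> i m)"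
    using pf_c1[OF QpX_Qp[OF x p] QpX_Qp[OF y p] p] b by blast
qed

lemma finite_bound: "finite J \<Longrightarrow> \<exists>m::nat. \<forall>i\<in>J. f i \<le> m"
  by (intro exI[of _ "\<Sum>i\<in>J. f i"] ballI member_le_sum) auto

lemma psum_sym: "psum p \<xi> \<eta> = psum p \<eta> \<xi>"
  unfolding psum_def Idx_def by (simp add: pf_sym disj_commute)

lemma pairing_sym:
  assumes "\<xi> \<in> QpX p X" "\<eta> \<in> QpX p X" "p > 0"
  shows "pairing p X \<xi> \<eta> = 1 \<longleftrightarrow> pairing p X \<eta> \<xi> = 1"
  using pairing_eq[OF assms] pairing_eq[OF assms(2,1,3)] psum_sym by metis

section \<open>Addition\<close>

lemma aux_id: "((A::rat) - B) / P = (X1 - X0) / P + (Y1 - Y0) / P - ((X1 + Y1) - A) / P + ((X0 + Y0) - B) / P"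
  by (cases "P = 0") (simp_all add: field_simps)

lemma qp_add_Qp:
  assumes x: "x \<in> Qp p" and y: "y \<in> Qp p" and p: "p > 0"
  shows "qp_add p x y \<in> Qp p"
proof -
  let ?k = "max (qp_den p x) (qp_den p y)"
  have bd: "Pw p ?k * qp_add p x y n \<in> \<int>" for n
  proof -
    have "Pw p ?k * qp_add p x y n = Pw p ?k * x n + Pw p ?k * y n
       - Pw p ?k * Pw p n * of_int \<lfloor>(x n + y n) / Pw p n\<rfloor>"
      unfolding qp_add_def rmod_def by (simp add: algebra_simps)
    moreover have "Pw p ?k * x n \<in> \<int>" "Pw p ?k * y n \<in> \<int>"
      using den_mono[OF x] den_mono[OF y] by auto
    ultimately show ?thesis by simp
  qed
  have rg: "0 \<le> qp_add p x y n \<and> qp_add p x y n < Pw p n" for n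
    unfolding qp_add_def using rmod_bounds p by simp
  have cp: "rmod (qp_add p x y (Suc n)) (Pw p n) = qp_add p x y n" for n
  proof -
    let ?a = "x (Suc n) + y (Suc n)" and ?b = "x n + y n"
    have 1: "(?a - rmod ?a (Pw p (Suc n))) / Pw p (Suc n) \<in> \<int>" using p by (intro rmod_int) simp
    then have 1: "(?a - rmod ?a (Pw p (Suc n))) / Pw p n \<in> \<int>" using div_Ints_mono[OF p 1] by simp
    have 2: "(?b - rmod ?b (Pw p n)) / Pw p n \<in> \<int>" using p by (intro rmod_int) simp
    have 3: "(x (Suc n) - x n) / Pw p n \<in> \<int>" "(y (Suc n) - y n) / Pw p n \<in> \<int>"
      using Qp_cong[OF x p] Qp_cong[OF y p] by auto
    have "(rmod ?a (Pw p (Suc n)) - rmod ?b (Pw p n)) / Pw p n =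
      (x (Suc n) - x n) / Pw p n + (y (Suc n) - y n) / Pw p n
      - (?a - rmod ?a (Pw p (Suc n))) / Pw p n + (?b - rmod ?b (Pw p n)) / Pw p n"
      by (rule aux_id)
    also have "\<dots> \<in> \<int>" using 1 2 3 by (intro Ints_add Ints_diff) auto
    finally have "(rmod ?a (Pw p (Suc n)) - rmod ?b (Pw p n)) / Pw p n \<in> \<int>" .
    then show ?thesis unfolding qp_add_def using rmod_bounds[of "Pw p n" ?b] p
      by (intro rmod_unique) auto
  qed
  show ?thesis unfolding Qp_def using bd rg cp by blast
qed

lemma qp_add_Zp:
  assumes x: "x \<in> Zp p" and y: "y \<in> Zp p" and p: "p > 0"
  shows "qp_add p x y \<in> Zp p"
  using qp_add_Qp[OF Zp_Qp[OF x] Zp_Qp[OF y] p] x y unfolding Zp_def qp_add_def rmod_def by simp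

lemma qp_add_zero: "p > 0 \<Longrightarrow> qp_add p qp_zero qp_zero = qp_zero"
  unfolding qp_add_def qp_zero_def rmod_def by simp

lemma QpX_add_closed:
  assumes x: "\<xi> \<in> QpX p X" and y: "\<eta> \<in> QpX p X" and p: "p > 0"
  shows "QpX_add p \<xi> \<eta> \<in> QpX p X"
proof -
  have sub: "{i \<in> X. QpX_add p \<xi> \<eta> i \<notin> Zp p} \<subseteq> {i. \<xi> i \<notin> Zp p} \<union> {i. \<eta> i \<notin> Zp p}"
  proof
    fix i assume "i \<in> {i \<in> X. QpX_add p \<xi> \<eta> i \<notin> Zp p}"
    then have "qp_add p (\<xi> i) (\<eta> i) \<notin> Zp p" unfolding QpX_add_def by simp
    then show "i \<in> {i. \<xi> i \<notin> Zp p} \<union> {i. \<eta> i \<notin> Zp p}" using qp_add_Zp[OF _ _ p] by blast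
  qed
  have "finite ({i. \<xi> i \<notin> Zp p} \<union> {i. \<eta> i \<notin> Zp p})"
    using QpX_fin[OF x p] QpX_fin[OF y p] by simp
  then have "finite {i \<in> X. QpX_add p \<xi> \<eta> i \<notin> Zp p}" using sub by (rule finite_subset[rotated])
  moreover have "\<forall>i\<in>X. QpX_add p \<xi> \<eta> i \<in> Qp p"
  proof
    fix i assume "i \<in> X"
    show "QpX_add p \<xi> \<eta> i \<in> Qp p" unfolding QpX_add_def
      by (rule qp_add_Qp[OF QpX_Qp[OF x p] QpX_Qp[OF y p] p])
  qed
  moreover have "\<forall>i. i \<notin> X \<longrightarrow> QpX_add p \<xi> \<eta> i = qp_zero"
  proof (intro allI impI)
    fix i assume i: "i \<notin> X"
    have "\<xi> i = qp_zero" "\<eta> i = qp_zero" using x y i unfolding QpX_def by blast+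
    then show "QpX_add p \<xi> \<eta> i = qp_zero" unfolding QpX_add_def using qp_add_zero[OF p] by simp
  qed
  ultimately show ?thesis unfolding QpX_def by blast
qed

lemma QpX_zero_in: "p > 0 \<Longrightarrow> QpX_zero \<in> QpX p X"
  unfolding QpX_def QpX_zero_def using qp_zero_Zp Zp_Qp by auto

lemma QpX_add_zero:
  assumes x: "\<xi> \<in> QpX p X" and p: "p > 0"
  shows "QpX_add p \<xi> QpX_zero = \<xi>" "QpX_add p QpX_zero \<xi> = \<xi>"
proof -
  have "qp_add p (\<xi> i) qp_zero = \<xi> i \<and> qp_add p qp_zero (\<xi> i) = \<xi> i" for i
  proof -
    have "rmod (\<xi> i n) (Pw p n) = \<xi> i n" for n
      using QpD(2,3)[OF QpX_Qp[OF x p]] p by (intro rmod_id) auto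
    then show ?thesis unfolding qp_add_def qp_zero_def by auto
  qed
  then show "QpX_add p \<xi> QpX_zero = \<xi>" "QpX_add p QpX_zero \<xi> = \<xi>"
    unfolding QpX_add_def QpX_zero_def by auto
qed

lemma psum_zero:
  assumes x: "\<xi> \<in> QpX p X" and p: "p > 0"
  shows "psum p \<xi> QpX_zero = 0"
  unfolding psum_def qp_prod_frac_def QpX_zero_def qp_zero_def by simp

lemma psum_add:
  assumes x: "\<xi> \<in> QpX p X" and y: "\<eta> \<in> QpX p X" and z: "\<zeta> \<in> QpX p X" and p: "p > 0"
  shows "c1 (psum p \<xi> (QpX_add p \<eta> \<zeta>)) (psum p \<xi> \<eta> + psum p \<xi> \<zeta>)"
proof -
  let ?s = "QpX_add p \<eta> \<zeta>"
  have s: "?s \<in> QpX p X" using QpX_add_closed[OF y z p] .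
  define J where "J = Idx p \<xi> \<eta> \<union> Idx p \<xi> \<zeta> \<union> Idx p \<xi> ?s"
  have J: "finite J" unfolding J_def using Idx_fin x y z s p by blast
  obtain m where m: "\<forall>i\<in>J. qp_den p (\<xi> i) + qp_den p (\<eta> i) + qp_den p (\<zeta> i) + qp_den p (?s i) \<le> m"
    using finite_bound[OF J, of "\<lambda>i. qp_den p (\<xi> i) + qp_den p (\<eta> i) + qp_den p (\<zeta> i) + qp_den p (?s i)"] by blast
  have b: "Pw p m * \<xi> i n \<in> \<int> \<and> Pw p m * \<eta> i n \<in> \<int> \<and> Pw p m * \<zeta> i n \<in> \<int> \<and> Pw p m * ?s i n \<in> \<int>"
    if "i \<in> J" for i n
    using m that den_mono[OF QpX_Qp[OF x p]] den_mono[OF QpX_Qp[OF y p]] den_mono[OF QpX_Qp[OF z p]]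
      den_mono[OF QpX_Qp[OF s p]] by fastforce
  have 1: "c1 (psum p \<xi> ?s) (\<Sum>i\<in>J. \<xi> i m * ?s i m)"
    using b by (intro psum_c1[OF x s p J]) (auto simp: J_def)
  have 2: "c1 (psum p \<xi> \<eta>) (\<Sum>i\<in>J. \<xi> i m * \<eta> i m)"
    using b by (intro psum_c1[OF x y p J]) (auto simp: J_def)
  have 3: "c1 (psum p \<xi> \<zeta>) (\<Sum>i\<in>J. \<xi> i m * \<zeta> i m)"
    using b by (intro psum_c1[OF x z p J]) (auto simp: J_def)
  have 4: "c1 (\<Sum>i\<in>J. \<xi> i m * ?s i m) (\<Sum>i\<in>J. \<xi> i m * \<eta> i m + \<xi> i m * \<zeta> i m)"
    using J(1)
  proof (rule c1_sum)
    fix i assume i: "i \<in> J"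
    let ?a = "\<eta> i m + \<zeta> i m"
    have e: "?s i m = ?a - Pw p m * of_int \<lfloor>?a / Pw p m\<rfloor>"
      unfolding QpX_add_def qp_add_def rmod_def by simp
    have "\<xi> i m * ?s i m - (\<xi> i m * \<eta> i m + \<xi> i m * \<zeta> i m) = - ((Pw p m * \<xi> i m) * of_int \<lfloor>?a / Pw p m\<rfloor>)"
      unfolding e by (simp add: algebra_simps)
    also have "\<dots> \<in> \<int>" using b[OF i] by simp
    finally show "c1 (\<xi> i m * ?s i m) (\<xi> i m * \<eta> i m + \<xi> i m * \<zeta> i m)" unfolding c1_def .
  qed
  have "c1 (psum p \<xi> ?s) ((\<Sum>i\<in>J. \<xi> i m * \<eta> i m) + (\<Sum>i\<in>J. \<xi> i m * \<zeta> i m))"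
    using c1_trans[OF 1 4] by (simp add: sum.distrib)
  moreover have "c1 ((\<Sum>i\<in>J. \<xi> i m * \<eta> i m) + (\<Sum>i\<in>J. \<xi> i m * \<zeta> i m)) (psum p \<xi> \<eta> + psum p \<xi> \<zeta>)"
    using 2 3 by (intro c1_add) (auto intro: c1_sym)
  ultimately show ?thesis by (rule c1_trans)
qed

lemma pairing_add:
  assumes x: "\<xi> \<in> QpX p X" and y: "\<eta> \<in> QpX p X" and z: "\<zeta> \<in> QpX p X" and p: "p > 0"
    and 1: "pairing p X \<xi> \<eta> = 1" and 2: "pairing p X \<xi> \<zeta> = 1"
  shows "pairing p X \<xi> (QpX_add p \<eta> \<zeta>) = 1"
proof -
  have "psum p \<xi> \<eta> + psum p \<xi> \<zeta> \<in> \<int>" using 1 2 pairing_eq x y z p by (metis Ints_add)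
  then have "psum p \<xi> (QpX_add p \<eta> \<zeta>) \<in> \<int>" using c1_Ints[OF psum_add[OF x y z p]] by blast
  then show ?thesis using pairing_eq[OF x QpX_add_closed[OF y z p] p] by blast
qed



definition lev :: "'a set \<Rightarrow> nat \<Rightarrow> 'a \<Rightarrow> nat" where
  "lev F n i = (if i \<in> F then n else 0)"

definition piv :: "'a set \<Rightarrow> nat \<Rightarrow> ('a \<Rightarrow> nat \<Rightarrow> rat) \<Rightarrow> ('a \<Rightarrow> rat)" where
  "piv F n \<xi> = (\<lambda>i. \<xi> i (lev F n i))"

definition Lam :: "nat \<Rightarrow> 'a set \<Rightarrow> nat \<Rightarrow> ('a \<Rightarrow> rat) set" where
  "Lam p F n = {t. \<forall>i. t i / Pw p (lev F n i) \<in> \<int>}"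

lemma lev_le: "lev F n i \<le> n" unfolding lev_def by simp

lemma Lam_cg: "cg (Lam p F n)"
  unfolding cg_def Lam_def
proof (intro conjI ballI)
  fix x y :: "'a \<Rightarrow> rat" assume "x \<in> {t. \<forall>i. t i / Pw p (lev F n i) \<in> \<int>}" "y \<in> {t. \<forall>i. t i / Pw p (lev F n i) \<in> \<int>}"
  then show "x + y \<in> {t. \<forall>i. t i / Pw p (lev F n i) \<in> \<int>}" by (auto simp: add_divide_distrib)
next
  fix x :: "'a \<Rightarrow> rat" assume "x \<in> {t. \<forall>i. t i / Pw p (lev F n i) \<in> \<int>}"
  then show "- x \<in> {t. \<forall>i. t i / Pw p (lev F n i) \<in> \<int>}" by auto
qed auto

lemma closed_sep:
  assumes C: "tau_closed p X C" and x: "\<xi> \<in> QpX p X" and xC: "\<xi> \<notin> C" and p: "p > 0"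
  shows "\<exists>F n. finite F \<and> (\<forall>s\<in>C. piv F n s \<noteq> piv F n \<xi>)"
proof -
  define P where "P = {i \<in> X. \<xi> i \<notin> Zp p}"
  have P: "finite P" "P \<subseteq> X" using x unfolding P_def QpX_def by auto
  have xb: "\<xi> \<in> (QpX p X - C) \<inter> box p X P" using x xC unfolding box_def P_def by auto
  have "tau_open p X (QpX p X - C)" using C unfolding tau_closed_def by (rule conjunct2)
  then have "\<forall>\<xi> \<in> (QpX p X - C) \<inter> box p X P. \<exists>F n. finite F \<and> F \<subseteq> X \<and>
            {\<eta> \<in> box p X P. \<forall>i\<in>F. \<eta> i n = \<xi> i n} \<subseteq> QpX p X - C"
    using P unfolding tau_open_def by (elim conjE allE impE) auto
  then obtain F' n where F': "finite F'" "F' \<subseteq> X"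
    and U: "{\<eta> \<in> box p X P. \<forall>i\<in>F'. \<eta> i n = \<xi> i n} \<subseteq> QpX p X - C"
    using xb by (elim ballE exE conjE) auto
  define F where "F = F' \<union> P"
  have "\<forall>s\<in>C. piv F n s \<noteq> piv F n \<xi>"
  proof (intro ballI notI)
    fix s assume sC: "s \<in> C" and eq: "piv F n s = piv F n \<xi>"
    have s: "s \<in> QpX p X" using C sC unfolding tau_closed_def by (elim conjE subsetD)
    have ev: "s i (lev F n i) = \<xi> i (lev F n i)" for i using eq unfolding piv_def by metis
    have "s \<in> box p X P" unfolding box_def
    proof (intro CollectI conjI s ballI)
      fix j assume j: "j \<in> X - P"
      then have xj: "\<xi> j \<in> Zp p" unfolding P_def by blast
      have sj: "s j \<in> Qp p" using QpX_Qp[OF s p] .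
      have "\<forall>m. \<xi> j m \<in> \<int>" using Zp_iff[OF Zp_Qp[OF xj] p] xj by blast
      then have "s j (lev F n j) \<in> \<int>" using ev by simp
      then have "Pw p 0 * s j (lev F n j) \<in> \<int>" by simp
      then have "Pw p 0 * s j 0 \<in> \<int>" using bound_one[OF sj p] by blast
      then have "s j 0 = 0" using Qp_0_int[OF sj] by simp
      then show "s j \<in> Zp p" using sj unfolding Zp_def by simp
    qed
    moreover have "\<forall>i\<in>F'. s i n = \<xi> i n"
    proof
      fix i assume "i \<in> F'"
      then have "lev F n i = n" unfolding lev_def F_def by simp
      then show "s i n = \<xi> i n" using ev[of i] by simp
    qed
    ultimately have "s \<in> QpX p X - C" using U by blast
    then show False using sC by blast
  qed
  moreover have "finite F" unfolding F_def using F' P by simp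
  ultimately show ?thesis by blast
qed

lemma closure_sep:
  assumes "\<xi> \<notin> tau_closure p X S"
  shows "\<exists>C. tau_closed p X C \<and> S \<subseteq> C \<and> \<xi> \<notin> C"
  using assms unfolding tau_closure_def by blast

lemma Ints_div_swap: "(a - b) / (P::rat) \<in> \<int> \<Longrightarrow> (b - a) / P \<in> \<int>"
  by (metis Ints_minus minus_diff_eq minus_divide_left)

lemma piv_add:
  assumes p: "p > 0"
  shows "piv F n (QpX_add p s s') - piv F n s - piv F n s' \<in> Lam p F n"
  unfolding Lam_def
proof (intro CollectI allI)
  fix i
  let ?l = "lev F n i"
  have "(s i ?l + s' i ?l - rmod (s i ?l + s' i ?l) (Pw p ?l)) / Pw p ?l \<in> \<int>"
    using p by (intro rmod_int) simp
  then have "(rmod (s i ?l + s' i ?l) (Pw p ?l) - (s i ?l + s' i ?l)) / Pw p ?l \<in> \<int>" by (rule Ints_div_swap)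
  then show "(piv F n (QpX_add p s s') - piv F n s - piv F n s') i / Pw p ?l \<in> \<int>"
    unfolding piv_def QpX_add_def qp_add_def by (simp add: field_simps)
qed

lemma zm_Lam: "t \<in> Lam p F n \<Longrightarrow> zm a t \<in> Lam p F n"
  using cg_zm[OF Lam_cg] .

lemma piv_torsion:
  assumes s: "s \<in> QpX p X" and p: "p > 0"
  shows "\<exists>N. zm (int (p ^ N)) (piv F n s) \<in> Lam p F n"
proof -
  define D where "D = {i. s i \<notin> Zp p}"
  have D: "finite D" unfolding D_def using QpX_fin[OF s p] .
  define N where "N = n + (\<Sum>i\<in>D. qp_den p (s i))"
  have "zm (int (p ^ N)) (piv F n s) \<in> Lam p F n"
    unfolding Lam_def
  proof (intro CollectI allI)
    fix i
    let ?l = "lev F n i"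
    have si: "s i \<in> Qp p" using QpX_Qp[OF s p] .
    have "qp_den p (s i) \<le> N - ?l"
    proof (cases "i \<in> D")
      case True
      then have "qp_den p (s i) \<le> (\<Sum>i\<in>D. qp_den p (s i))" using D by (intro member_le_sum) auto
      then show ?thesis unfolding N_def using lev_le[of F n i] by simp
    next
      case False
      then have "s i \<in> Zp p" unfolding D_def by blast
      then show ?thesis using Zp_den p by simp
    qed
    then have "Pw p (N - ?l) * s i ?l \<in> \<int>" using den_mono[OF si] by blast
    moreover have "zm (int (p ^ N)) (piv F n s) i / Pw p ?l = Pw p (N - ?l) * s i ?l"
      unfolding zm_def piv_def using lev_le[of F n i] p
      by (simp add: power_diff N_def)
    ultimately show "zm (int (p ^ N)) (piv F n s) i / Pw p ?l \<in> \<int>" by simp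
  qed
  then show ?thesis by blast
qed

lemma range_eq: "(M::rat) > 0 \<Longrightarrow> 0 \<le> a \<Longrightarrow> a < M \<Longrightarrow> 0 \<le> b \<Longrightarrow> b < M \<Longrightarrow> (a - b) / M \<in> \<int> \<Longrightarrow> a = b"
  using rmod_unique[of M b a] rmod_id[of M a] by simp

lemma piv_eq:
  assumes s: "s \<in> QpX p X" and x: "\<xi> \<in> QpX p X" and p: "p > 0"
    and d: "piv F n s - piv F n \<xi> \<in> Lam p F n"
  shows "piv F n s = piv F n \<xi>"
proof
  fix i
  let ?l = "lev F n i"
  have "(s i ?l - \<xi> i ?l) / Pw p ?l \<in> \<int>" using d unfolding Lam_def piv_def by simp
  then show "piv F n s i = piv F n \<xi> i" unfolding piv_def
    using QpD(2,3)[OF QpX_Qp[OF s p]] QpD(2,3)[OF QpX_Qp[OF x p]] p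
    by (intro range_eq[of "Pw p ?l"]) auto
qed



lemma least_period:
  assumes c: "cg H" and n0: "n0 > (0::nat)" "zm (int n0) g \<in> H"
  shows "\<exists>e>0. zm (int e) g \<in> H \<and> (\<forall>a. zm a g \<in> H \<longrightarrow> int e dvd a)"
proof -
  have ex: "\<exists>n::nat. n > 0 \<and> zm (int n) g \<in> H" using n0 by blast
  define e where "e = (LEAST n::nat. n > 0 \<and> zm (int n) g \<in> H)"
  have e: "e > 0" "zm (int e) g \<in> H" using LeastI_ex[OF ex] unfolding e_def by auto
  have emin: "\<not> (n > 0 \<and> zm (int n) g \<in> H)" if "n < e" for n
    using not_less_Least[of n "\<lambda>n. n > 0 \<and> zm (int n) g \<in> H"] that unfolding e_def by blast
  have "int e dvd a" if a: "zm a g \<in> H" for a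
  proof -
    define q where "q = a div int e"
    define r where "r = a mod int e"
    have ar: "a = q * int e + r" unfolding q_def r_def by simp
    have r0: "0 \<le> r" "r < int e" unfolding r_def using e by auto
    have "zm r g = zm a g - zm q (zm (int e) g)" unfolding zm_mult using ar by (simp add: zm_def fun_eq_iff algebra_simps)
    then have "zm r g \<in> H" using cg_diff[OF c a cg_zm[OF c e(2)]] by metis
    then have "r = 0"
    proof (rule contrapos_pp)
      assume "r \<noteq> 0"
      then have "nat r > 0" "nat r < e" "int (nat r) = r" using r0 by auto
      then show "zm r g \<notin> H" using emin[of "nat r"] by auto
    qed
    then show ?thesis using ar by simp
  qed
  then show ?thesis using e by blast
qed

lemma sum_delta_fun:
  assumes "finite J"
  shows "(\<Sum>i\<in>J. (\<lambda>j. if j = i then f i else (0::rat))) = (\<lambda>j. if j \<in> J then f j else 0)"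
  using assms
proof (induction J rule: finite_induct)
  case empty
  show ?case by (simp add: zero_fun_def)
next
  case (insert x J)
  have "(\<Sum>i\<in>insert x J. (\<lambda>j. if j = i then f i else (0::rat))) =
     (\<lambda>j. if j = x then f x else 0) + (\<Sum>i\<in>J. (\<lambda>j. if j = i then f i else (0::rat)))"
    using insert by simp
  also have "\<dots> = (\<lambda>j. if j \<in> insert x J then f j else 0)"
    unfolding insert.IH using insert.hyps by (auto simp: fun_eq_iff)
  finally show ?case .
qed

lemma eta_Qp:
  fixes c :: "nat \<Rightarrow> rat"
  assumes p: "p > 0" and b: "\<And>m. Pw p (m + k) * c m \<in> \<int>"
    and cp: "\<And>m. c1 (of_nat p * c (Suc m)) (c m)"
  shows "(\<lambda>m. Pw p m * frac (c m)) \<in> Qp p"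
proof -
  have bd: "Pw p k * (Pw p m * frac (c m)) \<in> \<int>" for m
  proof -
    have "Pw p k * (Pw p m * frac (c m)) = Pw p (m + k) * c m - Pw p (m + k) * of_int \<lfloor>c m\<rfloor>"
      unfolding frac_def by (simp add: algebra_simps power_add)
    then show ?thesis using b[of m] by simp
  qed
  have rg: "0 \<le> Pw p m * frac (c m) \<and> Pw p m * frac (c m) < Pw p m" for m
    using p frac_ge_0[of "c m"] frac_lt_1[of "c m"] by simp
  have cpt: "rmod (Pw p (Suc m) * frac (c (Suc m))) (Pw p m) = Pw p m * frac (c m)" for m
  proof (rule rmod_unique)
    show "0 < Pw p m" using p by simp
    show "0 \<le> Pw p m * frac (c m)" "Pw p m * frac (c m) < Pw p m" using rg by auto
    have "(Pw p (Suc m) * frac (c (Suc m)) - Pw p m * frac (c m)) / Pw p m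
       = (of_nat p * c (Suc m) - c m) - of_nat p * of_int \<lfloor>c (Suc m)\<rfloor> + of_int \<lfloor>c m\<rfloor>"
      using p unfolding frac_def by (simp add: field_simps)
    also have "\<dots> \<in> \<int>" using cp[of m] unfolding c1_def by simp
    finally show "(Pw p (Suc m) * frac (c (Suc m)) - Pw p m * frac (c m)) / Pw p m \<in> \<int>" .
  qed
  show ?thesis unfolding Qp_def using bd rg cpt by blast
qed

lemma eta_Zp:
  fixes c :: "nat \<Rightarrow> rat"
  assumes p: "p > 0" and b: "\<And>m. Pw p m * c m \<in> \<int>"
    and cp: "\<And>m. c1 (of_nat p * c (Suc m)) (c m)"
  shows "(\<lambda>m. Pw p m * frac (c m)) \<in> Zp p"
proof -
  have "(\<lambda>m. Pw p m * frac (c m)) \<in> Qp p" using eta_Qp[of p 0 c] p b cp by simp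
  moreover have "c 0 \<in> \<int>" using b[of 0] by simp
  then have "frac (c 0) = 0" by (simp add: frac_eq_0_iff)
  ultimately show ?thesis unfolding Zp_def by simp
qed



definition dl :: "nat \<Rightarrow> 'a \<Rightarrow> nat \<Rightarrow> ('a \<Rightarrow> rat)" where
  "dl p i m = (\<lambda>j. if j = i then 1 / Pw p m else 0)"

lemma zm_dl: "p > 0 \<Longrightarrow> zm a (dl p i m) = (\<lambda>j. if j = i then of_int a / Pw p m else 0)"
  unfolding zm_def dl_def by (auto simp: fun_eq_iff)

lemma sep:
  fixes X :: "'a set" and T :: "('a \<Rightarrow> rat) set"
  assumes p: "p > 1" and X: "countable X" and F: "finite F"
    and T0: "0 \<in> T" and Tadd: "\<forall>x\<in>T. \<forall>y\<in>T. x + y \<in> T" and LT: "Lam p F n \<subseteq> T"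
    and Ttor: "\<forall>t\<in>T. \<exists>N. zm (int (p ^ N)) t \<in> Lam p F n"
    and x: "\<xi> \<in> QpX p X" and u: "piv F n \<xi> \<notin> T"
  shows "\<exists>\<eta> \<in> QpX p X. (\<forall>s\<in>QpX p X. piv F n s \<in> T \<longrightarrow> psum p s \<eta> \<in> \<int>) \<and> psum p \<xi> \<eta> \<notin> \<int>"
proof -
  have p0: "p > 0" using p by simp
  have Tnat: "zm (int k) t \<in> T" if t: "t \<in> T" for t k
  proof (induction k)
    case 0 show ?case using T0 by (metis of_nat_0 zm_0)
  next
    case (Suc k)
    have e: "zm (int (Suc k)) t = zm (int k) t + t" by (simp add: zm_def fun_eq_iff algebra_simps)
    show ?case unfolding e using Suc t Tadd by blast
  qed
  have cgT: "cg T" unfolding cg_def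
  proof (intro conjI ballI)
    show "0 \<in> T" by (rule T0)
  next
    fix x y assume "x \<in> T" "y \<in> T" then show "x + y \<in> T" using Tadd by blast
  next
    fix t assume t: "t \<in> T"
    then obtain N where N: "zm (int (p ^ N)) t \<in> Lam p F n" using Ttor by blast
    have "- zm (int (p ^ N)) t \<in> Lam p F n" using N Lam_cg unfolding cg_def by blast
    then have 1: "- zm (int (p ^ N)) t \<in> T" using LT by blast
    have 2: "zm (int (p ^ N - 1)) t \<in> T" using Tnat[OF t] .
    have "p ^ N \<ge> 1" using p0 by simp
    then have r: "(of_nat (p ^ N - Suc 0) :: rat) = Pw p N - 1" by (simp add: of_nat_diff)
    have "- t = zm (int (p ^ N - 1)) t + (- zm (int (p ^ N)) t)"
      unfolding zm_def fun_eq_iff by (simp add: r algebra_simps)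
    then show "- t \<in> T" using 1 2 Tadd by metis
  qed
  define u where "u = piv F n \<xi>"
  obtain N0 where N0: "zm (int (p ^ N0)) u \<in> Lam p F n" using piv_torsion[OF x p0] unfolding u_def by blast
  have "p ^ N0 > 0" using p0 by simp
  then obtain e where e: "e > 0" "zm (int e) u \<in> T" "\<And>a. zm a u \<in> T \<Longrightarrow> int e dvd a"
    using least_period[OF cgT, of "p ^ N0" u] N0 LT by blast
  have e2: "e \<noteq> 1" using e(2) u unfolding u_def by auto
  have ad0: "addm T (\<lambda>_. 0)" unfolding addm_def by simp
  have v: "c1 (of_int a * (1 / of_nat e)) ((\<lambda>_. 0) (zm a u))" if za: "zm a u \<in> T" for a
  proof -
    obtain q where "a = int e * q" using e(3)[OF za] by blast
    then have "of_int a * (1 / of_nat e) = (of_int q :: rat)" using e(1) by simp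
    then show ?thesis unfolding c1_def by simp
  qed
  obtain \<chi>1 where \<chi>1: "addm (span1 T u) \<chi>1" "\<forall>h\<in>T. c1 (\<chi>1 h) 0" "c1 (\<chi>1 u) (1 / of_nat e)"
    using step_ext[OF cgT ad0, of u "1 / of_nat e"] v by auto
  have H1: "cg (span1 T u)" "T \<subseteq> span1 T u" "u \<in> span1 T u" using cg_span1[OF cgT] by auto
  define g where "g k = dl p (from_nat_into X (fst (prod_decode k))) (snd (prod_decode k))" for k
  obtain H \<chi> where H: "cg H" "span1 T u \<subseteq> H" "\<forall>k. g k \<in> H" "addm H \<chi>" "\<forall>h\<in>span1 T u. c1 (\<chi> h) (\<chi>1 h)"
    using extend[OF H1(1) \<chi>1(1), of g] by blast
  have dlH: "dl p i m \<in> H" if i: "i \<in> X" for i m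
  proof -
    have "g (prod_encode (to_nat_on X i, m)) = dl p i m" unfolding g_def using X i by simp
    then show ?thesis using H(3) by metis
  qed
  have chi0: "c1 (\<chi> t) 0" if "t \<in> T" for t
    using H(5) \<chi>1(2) H1(2) that c1_trans by blast
  have chiu: "c1 (\<chi> u) (1 / of_nat e)"
    using H(5) \<chi>1(3) H1(3) c1_trans by blast
  define c where "c i m = \<chi> (dl p i m)" for i m
  have czm: "c1 (\<chi> (zm a (dl p i m))) (of_int a * c i m)" if "i \<in> X" for i m a
    unfolding c_def by (rule addm_zm_c1[OF H(1) H(4) dlH[OF that]])
  have F3: "Pw p (m + lev F n i) * c i m \<in> \<int>" if i: "i \<in> X" for i m
  proof -
    let ?l = "lev F n i"
    have "zm (int (p ^ (m + ?l))) (dl p i m) = (\<lambda>j. if j = i then Pw p ?l else 0)"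
      unfolding zm_dl[OF p0] using p0 by (auto simp: fun_eq_iff power_add)
    moreover have "(\<lambda>j. if j = i then Pw p ?l else 0) \<in> Lam p F n"
      unfolding Lam_def using p0 by auto
    ultimately have "c1 (\<chi> (zm (int (p ^ (m + ?l))) (dl p i m))) 0" using chi0 LT by auto
    then have "c1 (of_int (int (p ^ (m + ?l))) * c i m) 0" using czm[OF i] c1_trans c1_sym by blast
    then show ?thesis unfolding c1_int_iff by simp
  qed
  have F4: "c1 (of_nat p * c i (Suc m)) (c i m)" if i: "i \<in> X" for i m
  proof -
    have "zm (int p) (dl p i (Suc m)) = dl p i m"
      unfolding zm_def dl_def using p0 by (auto simp: fun_eq_iff)
    then show ?thesis using czm[OF i, of "int p" "Suc m"] unfolding c_def by (simp add: c1_sym)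
  qed
  define \<eta> where "\<eta> i = (if i \<in> X then (\<lambda>m. Pw p m * frac (c i m)) else qp_zero)" for i
  have \<eta>Qp: "\<eta> i \<in> Qp p" if "i \<in> X" for i
    unfolding \<eta>_def using that eta_Qp[OF p0, of "lev F n i" "c i"] F3 F4 by simp
  have \<eta>Zp: "\<eta> i \<in> Zp p" if "i \<in> X" "i \<notin> F" for i
    unfolding \<eta>_def using that eta_Zp[OF p0, of "c i"] F3[of i] F4 by (simp add: lev_def)
  have \<eta>X: "\<eta> \<in> QpX p X"
  proof -
    have "{i \<in> X. \<eta> i \<notin> Zp p} \<subseteq> F" using \<eta>Zp by blast
    then have "finite {i \<in> X. \<eta> i \<notin> Zp p}" using F finite_subset by blast
    then show ?thesis unfolding QpX_def using \<eta>Qp \<eta>_def by simp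
  qed
  have key: "c1 (psum p s \<eta>) (\<chi> (piv F n s))" if s: "s \<in> QpX p X" for s
  proof -
    define J where "J = Idx p s \<eta> \<union> (F \<inter> X)"
    have J: "finite J" unfolding J_def using Idx_fin[OF s \<eta>X p0] F by simp
    have JX: "J \<subseteq> X" unfolding J_def Idx_def using QpX_nonZp[OF s p0] QpX_nonZp[OF \<eta>X p0] by blast
    obtain m where m: "\<forall>i\<in>J. qp_den p (s i) + qp_den p (\<eta> i) + n \<le> m"
      using finite_bound[OF J, of "\<lambda>i. qp_den p (s i) + qp_den p (\<eta> i) + n"] by blast
    have b: "Pw p m * s i k \<in> \<int> \<and> Pw p m * \<eta> i k \<in> \<int>" if "i \<in> J" for i k
      using m that den_mono[OF QpX_Qp[OF s p0]] den_mono[OF QpX_Qp[OF \<eta>X p0]] by fastforce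
    have 1: "c1 (psum p s \<eta>) (\<Sum>i\<in>J. s i m * \<eta> i m)"
      using b by (intro psum_c1[OF s \<eta>X p0 J]) (auto simp: J_def)
    define ev where "ev i = (\<lambda>j. if j = i then s i (lev F n i) else (0::rat))" for i
    have evH: "ev i \<in> H \<and> c1 (s i m * \<eta> i m) (\<chi> (ev i))" if i: "i \<in> J" for i
    proof -
      let ?l = "lev F n i"
      have iX: "i \<in> X" using i JX by blast
      obtain a where a: "Pw p m * s i m = of_int a" using b[OF i, of m] by (auto elim: Ints_cases)
      have "s i m * \<eta> i m = of_int a * frac (c i m)" unfolding \<eta>_def using iX a by (simp add: algebra_simps)
      moreover have "c1 (of_int a * frac (c i m)) (of_int a * c i m)" by (rule c1_mult[OF frac_c1]) simp
      moreover have "c1 (of_int a * c i m) (\<chi> (zm a (dl p i m)))" using czm[OF iX] by (rule c1_sym)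
      moreover define w1 where "w1 = (\<lambda>j. if j = i then s i m else (0::rat))"
      have w1: "zm a (dl p i m) = w1" unfolding zm_dl[OF p0] w1_def using a p0 by (auto simp: fun_eq_iff field_simps)
      ultimately have 2: "c1 (s i m * \<eta> i m) (\<chi> w1)" using c1_trans by metis
      have w1H: "w1 \<in> H" unfolding w1[symmetric] by (rule cg_zm[OF H(1) dlH[OF iX]])
      have "?l \<le> m" using m i lev_le[of F n i] by fastforce
      then have "(s i m - s i ?l) / Pw p ?l \<in> \<int>" using Qp_cong[OF QpX_Qp[OF s p0] p0] by blast
      then have d: "w1 - ev i \<in> Lam p F n" unfolding Lam_def w1_def ev_def by auto
      then have dT: "w1 - ev i \<in> T" using LT by blast
      then have dH: "w1 - ev i \<in> H" using H(2) H1(2) by blast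
      have evH: "ev i \<in> H" using cg_diff[OF H(1) w1H dH] by simp
      have "c1 (\<chi> (w1 - ev i)) (\<chi> w1 - \<chi> (ev i))" using addm_diff[OF H(1) H(4) w1H evH] .
      moreover have "c1 (\<chi> (w1 - ev i)) 0" using chi0[OF dT] .
      ultimately have "c1 (\<chi> w1 - \<chi> (ev i)) 0" using c1_trans c1_sym by blast
      then have "c1 (\<chi> w1) (\<chi> (ev i))" unfolding c1_def by simp
      then show ?thesis using 2 evH c1_trans by blast
    qed
    have 3: "c1 (\<Sum>i\<in>J. s i m * \<eta> i m) (\<Sum>i\<in>J. \<chi> (ev i))"
      using J evH by (intro c1_sum) auto
    have 4: "c1 (\<chi> (\<Sum>i\<in>J. ev i)) (\<Sum>i\<in>J. \<chi> (ev i))"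
      using addm_sum[OF H(1) H(4) J, of ev] evH by blast
    have "(\<Sum>i\<in>J. ev i) = (\<lambda>j. if j \<in> J then s j (lev F n j) else 0)"
      unfolding ev_def by (rule sum_delta_fun[OF J])
    also have "\<dots> = piv F n s"
    proof
      fix j
      show "(if j \<in> J then s j (lev F n j) else 0) = piv F n s j"
      proof (cases "j \<in> J")
        case True then show ?thesis unfolding piv_def by simp
      next
        case False
        show ?thesis
        proof (cases "j \<in> X")
          case True
          then have "j \<notin> F" "s j \<in> Zp p" using False unfolding J_def Idx_def by auto
          then show ?thesis using False unfolding piv_def lev_def Zp_def by simp
        next
          case False
          then have "s j = qp_zero" using s unfolding QpX_def by blast
          then show ?thesis unfolding piv_def qp_zero_def using \<open>j \<notin> J\<close> by simp
        qed
      qed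
    qed
    finally have 5: "(\<Sum>i\<in>J. ev i) = piv F n s" .
    show ?thesis using 1 3 4 unfolding 5 by (meson c1_trans c1_sym)
  qed
  have "\<forall>s\<in>QpX p X. piv F n s \<in> T \<longrightarrow> psum p s \<eta> \<in> \<int>"
  proof (intro ballI impI)
    fix s assume s: "s \<in> QpX p X" and sT: "piv F n s \<in> T"
    have "c1 (psum p s \<eta>) 0" using key[OF s] chi0[OF sT] c1_trans by blast
    then show "psum p s \<eta> \<in> \<int>" unfolding c1_int_iff .
  qed
  moreover have "psum p \<xi> \<eta> \<notin> \<int>"
  proof
    assume "psum p \<xi> \<eta> \<in> \<int>"
    moreover have "c1 (psum p \<xi> \<eta>) (1 / of_nat e)" using key[OF x] chiu unfolding u_def using c1_trans by blast
    ultimately have "(1 / of_nat e :: rat) \<in> \<int>" using c1_Ints by blast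
    moreover have "0 < (1 / of_nat e :: rat)" "(1 / of_nat e :: rat) < 1" using e(1) e2 by auto
    ultimately show False by (metis Ints_cases of_int_0_less_iff of_int_less_1_iff not_less zero_less_iff_neq_zero
          less_int_code(1) less_one int_one_le_iff_zero_less)
  qed
  ultimately show ?thesis using \<eta>X by blast
qed



lemma perp_sub: "perp p X A \<subseteq> QpX p X" unfolding perp_def by blast

lemma pairing_zero:
  assumes "\<eta> \<in> QpX p X" "p > 0"
  shows "pairing p X QpX_zero \<eta> = 1" "pairing p X \<eta> QpX_zero = 1"
proof -
  have z: "QpX_zero \<in> QpX p X" using QpX_zero_in assms(2) .
  have "psum p \<eta> QpX_zero \<in> \<int>" using psum_zero[OF assms] by simp
  then show "pairing p X \<eta> QpX_zero = 1" using pairing_eq[OF assms(1) z assms(2)] by blast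
  then show "pairing p X QpX_zero \<eta> = 1" using pairing_sym[OF assms(1) z assms(2)] by blast
qed

lemma perp_zero: "A \<subseteq> QpX p X \<Longrightarrow> p > 0 \<Longrightarrow> QpX_zero \<in> perp p X A"
  unfolding perp_def using pairing_zero QpX_zero_in by blast

lemma perp_add:
  assumes A: "A \<subseteq> QpX p X" and p: "p > 0" and a: "a \<in> perp p X A" and b: "b \<in> perp p X A"
  shows "QpX_add p a b \<in> perp p X A"
proof -
  have aX: "a \<in> QpX p X" and bX: "b \<in> QpX p X" using a b perp_sub by blast+
  have "pairing p X (QpX_add p a b) \<eta> = 1" if e: "\<eta> \<in> A" for \<eta>
  proof -
    have eX: "\<eta> \<in> QpX p X" using e A by blast
    have "pairing p X \<eta> a = 1" "pairing p X \<eta> b = 1"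
      using a b e pairing_sym[OF aX eX p] pairing_sym[OF bX eX p] unfolding perp_def by auto
    then have "pairing p X \<eta> (QpX_add p a b) = 1" using pairing_add[OF eX aX bX p] by blast
    then show ?thesis using pairing_sym[OF QpX_add_closed[OF aX bX p] eX p] by blast
  qed
  then show ?thesis unfolding perp_def using QpX_add_closed[OF aX bX p] by blast
qed

lemma double_perp: "A \<subseteq> QpX p X \<Longrightarrow> p > 0 \<Longrightarrow> A \<subseteq> perp p X (perp p X A)"
  unfolding perp_def using pairing_sym by blast

lemma perp_closed:
  assumes A: "A \<subseteq> QpX p X" and p: "p > 0"
  shows "tau_closed p X (perp p X A)"
  unfolding tau_closed_def
proof (intro conjI perp_sub)
  show "tau_open p X (QpX p X - perp p X A)"
    unfolding tau_open_def
  proof (intro conjI allI impI ballI)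
    show "QpX p X - perp p X A \<subseteq> QpX p X" by blast
  next
    fix P \<xi> assume P: "finite P \<and> P \<subseteq> X" and xi: "\<xi> \<in> (QpX p X - perp p X A) \<inter> box p X P"
    have x: "\<xi> \<in> QpX p X" using xi by blast
    obtain \<eta> where e: "\<eta> \<in> A" "pairing p X \<xi> \<eta> \<noteq> 1" using xi unfolding perp_def by blast
    have eX: "\<eta> \<in> QpX p X" using e A by blast
    have ns: "psum p \<xi> \<eta> \<notin> \<int>" using e pairing_eq[OF x eX p] by blast
    define F where "F = P \<union> {i. \<eta> i \<notin> Zp p}"
    have F: "finite F" "F \<subseteq> X" unfolding F_def using P QpX_fin[OF eX p] QpX_nonZp[OF eX p] by auto
    obtain n where n: "\<forall>i\<in>F. qp_den p (\<xi> i) + qp_den p (\<eta> i) \<le> n"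
      using finite_bound[OF F(1), of "\<lambda>i. qp_den p (\<xi> i) + qp_den p (\<eta> i)"] by blast
    have "{\<zeta> \<in> box p X P. \<forall>i\<in>F. \<zeta> i n = \<xi> i n} \<subseteq> QpX p X - perp p X A"
    proof
      fix \<zeta> assume z: "\<zeta> \<in> {\<zeta> \<in> box p X P. \<forall>i\<in>F. \<zeta> i n = \<xi> i n}"
      have zX: "\<zeta> \<in> QpX p X" using z unfolding box_def by blast
      have IdxF: "Idx p w \<eta> \<subseteq> F" if w: "w \<in> box p X P" for w
      proof
        fix i assume i: "i \<in> Idx p w \<eta>"
        show "i \<in> F"
        proof (cases "w i \<in> Zp p")
          case True then show ?thesis using i unfolding Idx_def F_def by blast
        next
          case False
          have wX: "w \<in> QpX p X" using w unfolding box_def by blast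
          have "i \<in> X" using QpX_nonZp[OF wX p False] .
          then have "i \<in> P" using w False unfolding box_def by blast
          then show ?thesis unfolding F_def by blast
        qed
      qed
      have xb: "\<xi> \<in> box p X P" using xi by blast
      have zb: "\<zeta> \<in> box p X P" using z by blast
      have bx: "Pw p n * \<xi> i k \<in> \<int> \<and> Pw p n * \<eta> i k \<in> \<int>" if "i \<in> F" for i k
        using n that den_mono[OF QpX_Qp[OF x p]] den_mono[OF QpX_Qp[OF eX p]] by fastforce
      have bz: "Pw p n * \<zeta> i k \<in> \<int> \<and> Pw p n * \<eta> i k \<in> \<int>" if i: "i \<in> F" for i k
      proof -
        have "Pw p n * \<zeta> i n \<in> \<int>" using bx[OF i, of n] z i by simp
        then show ?thesis using bound_one[OF QpX_Qp[OF zX p] p] bx[OF i] by blast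
      qed
      have 1: "c1 (psum p \<xi> \<eta>) (\<Sum>i\<in>F. \<xi> i n * \<eta> i n)"
        using psum_c1[OF x eX p F(1) IdxF[OF xb]] bx by blast
      have 2: "c1 (psum p \<zeta> \<eta>) (\<Sum>i\<in>F. \<zeta> i n * \<eta> i n)"
        using psum_c1[OF zX eX p F(1) IdxF[OF zb]] bz by blast
      have "(\<Sum>i\<in>F. \<zeta> i n * \<eta> i n) = (\<Sum>i\<in>F. \<xi> i n * \<eta> i n)" using z by simp
      then have "c1 (psum p \<zeta> \<eta>) (psum p \<xi> \<eta>)" using 1 2 c1_trans c1_sym by metis
      then have "psum p \<zeta> \<eta> \<notin> \<int>" using ns c1_Ints by blast
      then have "pairing p X \<zeta> \<eta> \<noteq> 1" using pairing_eq[OF zX eX p] by blast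
      then show "\<zeta> \<in> QpX p X - perp p X A" using zX e(1) unfolding perp_def by blast
    qed
    then show "\<exists>F n. finite F \<and> F \<subseteq> X \<and> {\<eta> \<in> box p X P. \<forall>i\<in>F. \<eta> i n = \<xi> i n} \<subseteq> QpX p X - perp p X A"
      using F by blast
  qed
qed

lemma piv_zero: "piv F n QpX_zero = 0"
  unfolding piv_def QpX_zero_def qp_zero_def by (simp add: zero_fun_def)

lemma sep_set:
  fixes S :: "('a \<Rightarrow> nat \<Rightarrow> rat) set"
  assumes p: "p > 1" and X: "countable X" and S: "S \<subseteq> QpX p X" and S0: "QpX_zero \<in> S"
    and addS: "\<forall>s\<in>S. \<forall>s'\<in>S. \<exists>s''\<in>S. \<forall>F n. piv F n s + piv F n s' - piv F n s'' \<in> Lam p F n"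
    and x: "\<xi> \<in> QpX p X" and F: "finite F" and ne: "\<forall>s\<in>S. piv F n s \<noteq> piv F n \<xi>"
  shows "\<exists>\<eta>\<in>QpX p X. (\<forall>s\<in>S. pairing p X s \<eta> = 1) \<and> pairing p X \<xi> \<eta> \<noteq> 1"
proof -
  have p0: "p > 0" using p by simp
  define T where "T = {piv F n s + l | s l. s \<in> S \<and> l \<in> Lam p F n}"
  have LC: "cg (Lam p F n)" by (rule Lam_cg)
  have L0: "0 \<in> Lam p F n" using LC unfolding cg_def by blast
  have pivT: "piv F n s \<in> T" if "s \<in> S" for s
  proof -
    have "piv F n s = piv F n s + 0" by simp
    then show ?thesis unfolding T_def using that L0 by blast
  qed
  have T0: "0 \<in> T" using pivT[OF S0] piv_zero by metis
  have Tadd: "\<forall>x\<in>T. \<forall>y\<in>T. x + y \<in> T"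
  proof (intro ballI)
    fix x y assume "x \<in> T" "y \<in> T"
    then obtain s l s' l' where xy: "x = piv F n s + l" "s \<in> S" "l \<in> Lam p F n"
      "y = piv F n s' + l'" "s' \<in> S" "l' \<in> Lam p F n" unfolding T_def by blast
    obtain s'' where s'': "s'' \<in> S" "piv F n s + piv F n s' - piv F n s'' \<in> Lam p F n"
      using addS xy by blast
    have "x + y = piv F n s'' + ((piv F n s + piv F n s' - piv F n s'') + (l + l'))"
      unfolding xy by (simp add: algebra_simps)
    moreover have "(piv F n s + piv F n s' - piv F n s'') + (l + l') \<in> Lam p F n"
      using s'' xy LC unfolding cg_def by blast
    ultimately show "x + y \<in> T" unfolding T_def using s'' by blast
  qed
  have LT: "Lam p F n \<subseteq> T"
  proof
    fix l assume "l \<in> Lam p F n"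
    then have "l = piv F n QpX_zero + l" by (simp add: piv_zero)
    then show "l \<in> T" unfolding T_def using S0 \<open>l \<in> Lam p F n\<close> by blast
  qed
  have Ttor: "\<forall>t\<in>T. \<exists>N. zm (int (p ^ N)) t \<in> Lam p F n"
  proof
    fix t assume "t \<in> T"
    then obtain s l where t: "t = piv F n s + l" "s \<in> S" "l \<in> Lam p F n" unfolding T_def by blast
    obtain N where N: "zm (int (p ^ N)) (piv F n s) \<in> Lam p F n" using piv_torsion[of s p X F n] t S p0 by blast
    have eqz: "zm (int (p ^ N)) t = zm (int (p ^ N)) (piv F n s) + zm (int (p ^ N)) l" unfolding t zm_add2 ..
    moreover have "zm (int (p ^ N)) l \<in> Lam p F n" using zm_Lam t by blast
    moreover have "zm (int (p ^ N)) (piv F n s) + zm (int (p ^ N)) l \<in> Lam p F n"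
      using N \<open>zm (int (p ^ N)) l \<in> Lam p F n\<close> LC unfolding cg_def by blast
    ultimately have "zm (int (p ^ N)) t \<in> Lam p F n" unfolding eqz by blast
    then show "\<exists>N. zm (int (p ^ N)) t \<in> Lam p F n" by blast
  qed
  have u: "piv F n \<xi> \<notin> T"
  proof
    assume "piv F n \<xi> \<in> T"
    then obtain s l where t: "piv F n \<xi> = piv F n s + l" "s \<in> S" "l \<in> Lam p F n" unfolding T_def by blast
    have "piv F n s - piv F n \<xi> = - l" unfolding t by simp
    also have "\<dots> \<in> Lam p F n" using t LC unfolding cg_def by blast
    finally have "piv F n s = piv F n \<xi>" using piv_eq[of s p X \<xi> F n] t S x p0 by blast
    then show False using ne t by blast
  qed
  obtain \<eta> where e: "\<eta> \<in> QpX p X" "\<forall>s\<in>QpX p X. piv F n s \<in> T \<longrightarrow> psum p s \<eta> \<in> \<int>" "psum p \<xi> \<eta> \<notin> \<int>"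
    using sep[OF p X F T0 Tadd LT Ttor x u] by (elim bexE conjE) blast
  have "\<forall>s\<in>S. pairing p X s \<eta> = 1"
  proof
    fix s assume s: "s \<in> S"
    have "piv F n s \<in> T" using pivT s by blast
    then have "psum p s \<eta> \<in> \<int>" using e(2) s S by blast
    then show "pairing p X s \<eta> = 1" using pairing_eq[of s p X \<eta>] s S e(1) p0 by blast
  qed
  moreover have "pairing p X \<xi> \<eta> \<noteq> 1" using pairing_eq[OF x e(1) p0] e(3) by blast
  ultimately show ?thesis using e(1) by blast
qed

lemma sep_closed:
  fixes S :: "('a \<Rightarrow> nat \<Rightarrow> rat) set"
  assumes p: "p > 1" and X: "countable X" and S: "S \<subseteq> QpX p X" and S0: "QpX_zero \<in> S"
    and addS: "\<forall>s\<in>S. \<forall>s'\<in>S. \<exists>s''\<in>S. \<forall>F n. piv F n s + piv F n s' - piv F n s'' \<in> Lam p F n"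
    and C: "tau_closed p X C" "S \<subseteq> C" and x: "\<xi> \<in> QpX p X" "\<xi> \<notin> C"
  shows "\<exists>\<eta>\<in>QpX p X. (\<forall>s\<in>S. pairing p X s \<eta> = 1) \<and> pairing p X \<xi> \<eta> \<noteq> 1"
proof -
  have p0: "p > 0" using p by simp
  obtain F n where "finite F" "\<forall>s\<in>C. piv F n s \<noteq> piv F n \<xi>" using closed_sep[OF C(1) x p0] by blast
  then show ?thesis using sep_set[OF p X S S0 addS x(1), of F n] C(2) by blast
qed

lemma submod_addS:
  assumes "submodule p X K" "p > 0"
  shows "\<forall>s\<in>K. \<forall>s'\<in>K. \<exists>s''\<in>K. \<forall>F n. piv F n s + piv F n s' - piv F n s'' \<in> Lam p F n"
proof (intro ballI)
  fix s s' assume "s \<in> K" "s' \<in> K"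
  then have "QpX_add p s s' \<in> K" using assms unfolding submodule_def by blast
  moreover have "piv F n s + piv F n s' - piv F n (QpX_add p s s') \<in> Lam p F n" for F n
  proof -
    have "piv F n (QpX_add p s s') - piv F n s - piv F n s' \<in> Lam p F n" using piv_add assms(2) by blast
    then have "- (piv F n (QpX_add p s s') - piv F n s - piv F n s') \<in> Lam p F n"
      using Lam_cg unfolding cg_def by blast
    then show ?thesis by (simp add: algebra_simps)
  qed
  ultimately show "\<exists>s''\<in>K. \<forall>F n. piv F n s + piv F n s' - piv F n s'' \<in> Lam p F n" by blast
qed

lemma part_a:
  assumes p: "p > 1" and X: "countable X" and K: "submodule p X K" "tau_closed p X K"
  shows "K = perp p X (perp p X K)"
proof
  have p0: "p > 0" using p by simp
  have KX: "K \<subseteq> QpX p X" using K unfolding submodule_def by blast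
  show "K \<subseteq> perp p X (perp p X K)" using double_perp[OF KX p0] .
  show "perp p X (perp p X K) \<subseteq> K"
  proof
    fix \<xi> assume xi: "\<xi> \<in> perp p X (perp p X K)"
    show "\<xi> \<in> K"
    proof (rule ccontr)
      assume nK: "\<xi> \<notin> K"
      have x: "\<xi> \<in> QpX p X" using xi perp_sub by blast
      have K0: "QpX_zero \<in> K" using K unfolding submodule_def by blast
      obtain \<eta> where e: "\<eta> \<in> QpX p X" "\<forall>s\<in>K. pairing p X s \<eta> = 1" "pairing p X \<xi> \<eta> \<noteq> 1"
        using sep_closed[OF p X KX K0 submod_addS[OF K(1) p0] K(2) subset_refl x nK] by blast
      have "\<eta> \<in> perp p X K" unfolding perp_def using e pairing_sym[OF _ e(1) p0] KX by blast
      then show False using xi e(3) unfolding perp_def by blast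
    qed
  qed
qed



lemma neg_Lam: "x \<in> Lam p F n \<Longrightarrow> - x \<in> Lam p F n"
  using Lam_cg unfolding cg_def by blast
lemma add_Lam: "x \<in> Lam p F n \<Longrightarrow> y \<in> Lam p F n \<Longrightarrow> x + y \<in> Lam p F n"
  using Lam_cg unfolding cg_def by blast

lemma setsum_addS:
  assumes p: "p > 0" and A: "A \<subseteq> QpX p X" and B: "B \<subseteq> QpX p X"
  shows "\<forall>s\<in>setsum_QpX p (perp p X A) (perp p X B). \<forall>s'\<in>setsum_QpX p (perp p X A) (perp p X B).
     \<exists>s''\<in>setsum_QpX p (perp p X A) (perp p X B). \<forall>F n. piv F n s + piv F n s' - piv F n s'' \<in> Lam p F n"
proof (intro ballI)
  fix s s' assume "s \<in> setsum_QpX p (perp p X A) (perp p X B)" "s' \<in> setsum_QpX p (perp p X A) (perp p X B)"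
  then obtain a b a' b' where s: "s = QpX_add p a b" "a \<in> perp p X A" "b \<in> perp p X B"
    and s': "s' = QpX_add p a' b'" "a' \<in> perp p X A" "b' \<in> perp p X B"
    unfolding setsum_QpX_def by blast
  define s'' where "s'' = QpX_add p (QpX_add p a a') (QpX_add p b b')"
  have "s'' \<in> setsum_QpX p (perp p X A) (perp p X B)"
    unfolding setsum_QpX_def s''_def using perp_add[OF A p] perp_add[OF B p] s s' by blast
  moreover have "piv F n s + piv F n s' - piv F n s'' \<in> Lam p F n" for F n
  proof -
    let ?D = "\<lambda>x y. piv F n (QpX_add p x y) - piv F n x - piv F n y"
    have D: "?D x y \<in> Lam p F n" for x y using piv_add[OF p] .
    have "piv F n s + piv F n s' - piv F n s'' =
       ?D a b + ?D a' b' + (- ?D (QpX_add p a a') (QpX_add p b b')) + (- ?D a a') + (- ?D b b')"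
      unfolding s s' s''_def by (simp add: algebra_simps)
    also have "\<dots> \<in> Lam p F n" using D by (intro add_Lam neg_Lam) auto
    finally show ?thesis .
  qed
  ultimately show "\<exists>s''\<in>setsum_QpX p (perp p X A) (perp p X B). \<forall>F n. piv F n s + piv F n s' - piv F n s'' \<in> Lam p F n"
    by blast
qed

theorem lemma2p8:
  fixes p :: nat and X :: "'a set" and K L :: "('a \<Rightarrow> nat \<Rightarrow> rat) set"
  assumes "prime p" and "countable X"
    and "submodule p X K" and "tau_closed p X K"
    and "submodule p X L" and "tau_closed p X L"
  shows "K = perp p X (perp p X K)
    \<and> (K \<subseteq> L \<longrightarrow> perp p X L \<subseteq> perp p X K)
    \<and> perp p X (setsum_QpX p K L) = perp p X K \<inter> perp p X L
    \<and> perp p X (K \<inter> L) = tau_closure p X (setsum_QpX p (perp p X K) (perp p X L))"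
proof -
  have p: "p > 1" using assms(1) prime_gt_1_nat by blast
  then have p0: "p > 0" by simp
  have X: "countable X" by fact
  have KX: "K \<subseteq> QpX p X" and LX: "L \<subseteq> QpX p X" using assms(3,5) unfolding submodule_def by blast+
  have K0: "QpX_zero \<in> K" and L0: "QpX_zero \<in> L" using assms(3,5) unfolding submodule_def by blast+
  have a: "K = perp p X (perp p X K)" by (rule part_a[OF p X assms(3,4)])
  have aL: "L = perp p X (perp p X L)" by (rule part_a[OF p X assms(5,6)])
  have b: "K \<subseteq> L \<longrightarrow> perp p X L \<subseteq> perp p X K" unfolding perp_def by blast
  have c: "perp p X (setsum_QpX p K L) = perp p X K \<inter> perp p X L"
  proof
    show "perp p X (setsum_QpX p K L) \<subseteq> perp p X K \<inter> perp p X L"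
    proof
      fix \<xi> assume xi: "\<xi> \<in> perp p X (setsum_QpX p K L)"
      have "k \<in> setsum_QpX p K L" if "k \<in> K" for k
      proof -
        have "QpX_add p k QpX_zero = k" using QpX_add_zero(1)[of k p X] that KX p0 by blast
        then show ?thesis unfolding setsum_QpX_def using that L0 by force
      qed
      moreover have "l \<in> setsum_QpX p K L" if "l \<in> L" for l
      proof -
        have "QpX_add p QpX_zero l = l" using QpX_add_zero(2)[of l p X] that LX p0 by blast
        then show ?thesis unfolding setsum_QpX_def using that K0 by force
      qed
      ultimately show "\<xi> \<in> perp p X K \<inter> perp p X L" using xi unfolding perp_def by blast
    qed
  next
    show "perp p X K \<inter> perp p X L \<subseteq> perp p X (setsum_QpX p K L)"
    proof
      fix \<xi> assume xi: "\<xi> \<in> perp p X K \<inter> perp p X L"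
      have x: "\<xi> \<in> QpX p X" using xi perp_sub by blast
      have "pairing p X \<xi> s = 1" if s: "s \<in> setsum_QpX p K L" for s
      proof -
        obtain k l where kl: "s = QpX_add p k l" "k \<in> K" "l \<in> L" using s unfolding setsum_QpX_def by blast
        have "pairing p X \<xi> k = 1" "pairing p X \<xi> l = 1" using xi kl unfolding perp_def by blast+
        then show ?thesis unfolding kl(1) using pairing_add[OF x _ _ p0] kl KX LX by blast
      qed
      then show "\<xi> \<in> perp p X (setsum_QpX p K L)" unfolding perp_def using x by blast
    qed
  qed
  define S where "S = setsum_QpX p (perp p X K) (perp p X L)"
  have SX: "S \<subseteq> QpX p X" unfolding S_def setsum_QpX_def using QpX_add_closed[OF _ _ p0] perp_sub by blast
  have S0: "QpX_zero \<in> S"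
  proof -
    have "(QpX_zero :: 'a \<Rightarrow> nat \<Rightarrow> rat) = QpX_add p QpX_zero QpX_zero" using QpX_add_zero(1)[OF QpX_zero_in[OF p0, of X] p0] by simp
    then have "\<exists>a b. (QpX_zero :: 'a \<Rightarrow> nat \<Rightarrow> rat) = QpX_add p a b \<and> a \<in> perp p X K \<and> b \<in> perp p X L"
      using perp_zero[OF KX p0] perp_zero[OF LX p0] by blast
    then show ?thesis unfolding S_def setsum_QpX_def by simp
  qed
  have KLX: "K \<inter> L \<subseteq> QpX p X" using KX by blast
  have d: "perp p X (K \<inter> L) = tau_closure p X S"
  proof
    show "tau_closure p X S \<subseteq> perp p X (K \<inter> L)"
    proof -
      have "S \<subseteq> perp p X (K \<inter> L)"
      proof
        fix s assume "s \<in> S"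
        then obtain a b where ab: "s = QpX_add p a b" "a \<in> perp p X K" "b \<in> perp p X L"
          unfolding S_def setsum_QpX_def by blast
        have aX: "a \<in> QpX p X" and bX: "b \<in> QpX p X" using ab perp_sub by blast+
        have sX: "s \<in> QpX p X" using ab QpX_add_closed[OF aX bX p0] by simp
        have "pairing p X s z = 1" if z: "z \<in> K \<inter> L" for z
        proof -
          have zX: "z \<in> QpX p X" using z KX by blast
          have "pairing p X z a = 1" "pairing p X z b = 1"
            using ab z pairing_sym[OF aX zX p0] pairing_sym[OF bX zX p0] unfolding perp_def by auto
          then have "pairing p X z s = 1" unfolding ab(1) using pairing_add[OF zX aX bX p0] by blast
          then show ?thesis using pairing_sym[OF sX zX p0] by blast
        qed
        then show "s \<in> perp p X (K \<inter> L)" unfolding perp_def using sX by blast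
      qed
      then show ?thesis unfolding tau_closure_def using perp_closed[OF KLX p0] by blast
    qed
  next
    show "perp p X (K \<inter> L) \<subseteq> tau_closure p X S"
    proof
      fix \<xi> assume xi: "\<xi> \<in> perp p X (K \<inter> L)"
      have x: "\<xi> \<in> QpX p X" using xi perp_sub by blast
      show "\<xi> \<in> tau_closure p X S"
      proof (rule ccontr)
        assume "\<xi> \<notin> tau_closure p X S"
        then obtain C where C: "tau_closed p X C" "S \<subseteq> C" "\<xi> \<notin> C" using closure_sep by blast
        have addS: "\<forall>s\<in>S. \<forall>s'\<in>S. \<exists>s''\<in>S. \<forall>F n. piv F n s + piv F n s' - piv F n s'' \<in> Lam p F n"
          unfolding S_def by (rule setsum_addS[OF p0 KX LX])
        obtain \<eta> where e: "\<eta> \<in> QpX p X" "\<forall>s\<in>S. pairing p X s \<eta> = 1" "pairing p X \<xi> \<eta> \<noteq> 1"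
          using sep_closed[OF p X SX S0 addS C(1) C(2) x C(3)] by blast
        have "\<eta> \<in> perp p X (perp p X K)"
        proof -
          have "pairing p X \<eta> a = 1" if a: "a \<in> perp p X K" for a
          proof -
            have aX: "a \<in> QpX p X" using a perp_sub by blast
            have "QpX_add p a QpX_zero = a" using QpX_add_zero(1)[OF aX p0] .
            then have "a \<in> S" unfolding S_def setsum_QpX_def using a perp_zero[OF LX p0] by force
            then show ?thesis using e(2) pairing_sym[OF aX e(1) p0] by blast
          qed
          then show ?thesis unfolding perp_def using e(1) by blast
        qed
        moreover have "\<eta> \<in> perp p X (perp p X L)"
        proof -
          have "pairing p X \<eta> b = 1" if b: "b \<in> perp p X L" for b
          proof -
            have bX: "b \<in> QpX p X" using b perp_sub by blast
            have "QpX_add p QpX_zero b = b" using QpX_add_zero(2)[OF bX p0] .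
            then have "b \<in> S" unfolding S_def setsum_QpX_def using b perp_zero[OF KX p0] by force
            then show ?thesis using e(2) pairing_sym[OF bX e(1) p0] by blast
          qed
          then show ?thesis unfolding perp_def using e(1) by blast
        qed
        ultimately have "\<eta> \<in> K \<inter> L" using a aL by blast
        then show False using xi e(3) unfolding perp_def by blast
      qed
    qed
  qed
  show ?thesis using a b c d unfolding S_def by blast
qed


end
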